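(* Let $D$ be an integral domain, $\star$ a semistar operation on $D$, and $n$ a nonnegative integer. The following are equivalent: (1) every $(\star,d_T)$-linked overring $T$ of $D$ has Krull dimension at most $n$; (2) every $\widetilde{\star}$-valuation overring of $D$ has Krull dimension at most $n$.
   Context: $D$ is an integral domain with quotient field $K$; $f(D)$ denotes nonzero finitely generated fractional ideals, $\overline{\mathcal F}(D)$ nonzero $D$-submodules of $K$. A semistar operation $\star$ on $D$ is a map $\overline{\mathcal F}(D)\to\overline{\mathcal F}(D)$ with $(xE)^\star=xE^\star$ ($0\neq x\in K$), $E\subseteq F\Rightarrow E^\star\subseteq F^\star$, $E\subseteq E^\star=(E^\star)^\star$. $E^{\star_f}:=\bigcup\{F^\star:F\in f(D),F\subseteq E\}$. A nonzero ideal $I$ is a quasi-$\star_f$-ideal if $I^{\star_f}\cap D=I$; $\operatorname{QMax}^{\star_f}(D)$ is the set of maximal proper quasi-$\star_f$-ideals. $E^{\widetilde\star}:=\bigcap\{ED_M:M\in\operatorname{QMax}^{\star_f}(D)\}$ ($=K$ if empty). A valuation overring $V$ of $D$ is a $\widetilde\star$-valuation overring if $F^{\widetilde\star}\subseteq FV$ for all $F\in f(D)$. An overring $T$ of $D$ ($D\subseteq T\subseteq K$) is $(\star,d_T)$-linked to $D$ if for every nonzero finitely generated ideal $F$ of $D$ with $F^\star=D^\star$ one has $FT=T$. *)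

theory Defs
  imports Main
begin

text \<open>Convention: the integral domain D is a subring of an ambient field of type 'a;
its quotient field K is realised as the subfield of fractions of D inside 'a.\<close>

definition is_subring :: "'a::field set \<Rightarrow> bool" where
  "is_subring D \<longleftrightarrow> 0 \<in> D \<and> 1 \<in> D \<and>
     (\<forall>x\<in>D. \<forall>y\<in>D. x + y \<in> D \<and> x - y \<in> D \<and> x * y \<in> D)"

definition qfield :: "'a::field set \<Rightarrow> 'a set" where
  "qfield D = {x / y | x y. x \<in> D \<and> y \<in> D \<and> y \<noteq> 0}"

definition is_submod :: "'a::field set \<Rightarrow> 'a set \<Rightarrow> bool" where
  "is_submod D E \<longleftrightarrow> E \<subseteq> qfield D \<and> 0 \<in> E \<and>
     (\<forall>x\<in>E. \<forall>y\<in>E. x + y \<in> E) \<and> (\<forall>d\<in>D. \<forall>x\<in>E. d * x \<in> E)"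

definition Fbar :: "'a::field set \<Rightarrow> 'a set set" where
  "Fbar D = {E. is_submod D E \<and> E \<noteq> {0}}"

definition dspan :: "'a::field set \<Rightarrow> 'a set \<Rightarrow> 'a set" where
  "dspan D S = {(\<Sum>s\<in>S. c s * s) | c. \<forall>s\<in>S. c s \<in> D}"

definition fD :: "'a::field set \<Rightarrow> 'a set set" where
  "fD D = {dspan D S | S. finite S \<and> S \<subseteq> qfield D \<and> dspan D S \<noteq> {0}}"

definition smul :: "'a::field \<Rightarrow> 'a set \<Rightarrow> 'a set" where
  "smul x E = (\<lambda>e. x * e) ` E"

definition submod_prod :: "'a::field set \<Rightarrow> 'a set \<Rightarrow> 'a set" where
  "submod_prod A B = {(\<Sum>i<n. a i * b i) | (n::nat) a b. \<forall>i<n. a i \<in> A \<and> b i \<in> B}"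

definition semistar :: "'a::field set \<Rightarrow> ('a set \<Rightarrow> 'a set) \<Rightarrow> bool" where
  "semistar D st \<longleftrightarrow>
     (\<forall>E\<in>Fbar D. st E \<in> Fbar D) \<and>
     (\<forall>x\<in>qfield D. \<forall>E\<in>Fbar D. x \<noteq> 0 \<longrightarrow> st (smul x E) = smul x (st E)) \<and>
     (\<forall>E\<in>Fbar D. \<forall>F\<in>Fbar D. E \<subseteq> F \<longrightarrow> st E \<subseteq> st F) \<and>
     (\<forall>E\<in>Fbar D. E \<subseteq> st E \<and> st (st E) = st E)"

definition star_f :: "'a::field set \<Rightarrow> ('a set \<Rightarrow> 'a set) \<Rightarrow> 'a set \<Rightarrow> 'a set" where
  "star_f D st E = \<Union>{st F | F. F \<in> fD D \<and> F \<subseteq> E}"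

definition is_ideal :: "'a::field set \<Rightarrow> 'a set \<Rightarrow> bool" where
  "is_ideal T I \<longleftrightarrow> I \<subseteq> T \<and> 0 \<in> I \<and>
     (\<forall>x\<in>I. \<forall>y\<in>I. x + y \<in> I \<and> x - y \<in> I) \<and> (\<forall>t\<in>T. \<forall>x\<in>I. t * x \<in> I)"

definition quasi_ideal :: "'a::field set \<Rightarrow> ('a set \<Rightarrow> 'a set) \<Rightarrow> 'a set \<Rightarrow> bool" where
  "quasi_ideal D st I \<longleftrightarrow> is_ideal D I \<and> I \<noteq> {0} \<and> star_f D st I \<inter> D = I"

definition QMax :: "'a::field set \<Rightarrow> ('a set \<Rightarrow> 'a set) \<Rightarrow> 'a set set" where
  "QMax D st = {M. quasi_ideal D st M \<and> M \<noteq> D \<and>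
      (\<forall>J. quasi_ideal D st J \<and> J \<noteq> D \<and> M \<subseteq> J \<longrightarrow> J = M)}"

definition loc :: "'a::field set \<Rightarrow> 'a set \<Rightarrow> 'a set" where
  "loc D M = {x / s | x s. x \<in> D \<and> s \<in> D \<and> s \<notin> M}"

definition star_tilde :: "'a::field set \<Rightarrow> ('a set \<Rightarrow> 'a set) \<Rightarrow> 'a set \<Rightarrow> 'a set" where
  "star_tilde D st E = (if QMax D st = {} then qfield D
      else \<Inter>{submod_prod E (loc D M) | M. M \<in> QMax D st})"

definition overring :: "'a::field set \<Rightarrow> 'a set \<Rightarrow> bool" where
  "overring D T \<longleftrightarrow> is_subring T \<and> D \<subseteq> T \<and> T \<subseteq> qfield D"

definition valuation_overring :: "'a::field set \<Rightarrow> 'a set \<Rightarrow> bool" where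
  "valuation_overring D V \<longleftrightarrow> overring D V \<and>
     (\<forall>x\<in>qfield D. x \<noteq> 0 \<longrightarrow> x \<in> V \<or> inverse x \<in> V)"

definition tilde_valuation_overring :: "'a::field set \<Rightarrow> ('a set \<Rightarrow> 'a set) \<Rightarrow> 'a set \<Rightarrow> bool" where
  "tilde_valuation_overring D st V \<longleftrightarrow> valuation_overring D V \<and>
     (\<forall>F\<in>fD D. star_tilde D st F \<subseteq> submod_prod F V)"

definition star_dT_linked :: "'a::field set \<Rightarrow> ('a set \<Rightarrow> 'a set) \<Rightarrow> 'a set \<Rightarrow> bool" where
  "star_dT_linked D st T \<longleftrightarrow> overring D T \<and>
     (\<forall>F\<in>fD D. F \<subseteq> D \<and> st F = st D \<longrightarrow> submod_prod F T = T)"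

definition prime_ideal :: "'a::field set \<Rightarrow> 'a set \<Rightarrow> bool" where
  "prime_ideal T P \<longleftrightarrow> is_ideal T P \<and> P \<noteq> T \<and>
     (\<forall>x\<in>T. \<forall>y\<in>T. x * y \<in> P \<longrightarrow> x \<in> P \<or> y \<in> P)"

text \<open>Krull dimension at most n: no strict chain of n+2 prime ideals.\<close>
definition krull_dim_le :: "'a::field set \<Rightarrow> nat \<Rightarrow> bool" where
  "krull_dim_le T n \<longleftrightarrow> \<not> (\<exists>P :: nat \<Rightarrow> 'a set.
      (\<forall>i\<le>Suc n. prime_ideal T (P i)) \<and> (\<forall>i\<le>n. P i \<subset> P (Suc i)))"

end

theory Submission
  imports Defs "HOL-Computational_Algebra.Polynomial"
begin


lemma sp_iff: "z \<in> submod_prod A B \<longleftrightarrow> (\<exists>(n::nat) a b. z = (\<Sum>i<n. a i * b i) \<and> (\<forall>i<n. a i \<in> A \<and> b i \<in> B))"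
  unfolding submod_prod_def by (rule mem_Collect_eq)

lemma sp_sub:
  assumes "0 \<in> C" "\<And>x y. x \<in> C \<Longrightarrow> y \<in> C \<Longrightarrow> x + y \<in> C"
    "\<And>a b. a \<in> A \<Longrightarrow> b \<in> B \<Longrightarrow> a * b \<in> C"
  shows "submod_prod A B \<subseteq> C"
proof
  fix z assume "z \<in> submod_prod A B"
  then obtain n :: nat and a b where z: "z = (\<Sum>i<n. a i * b i)" and ab: "\<forall>i<n. a i \<in> A \<and> b i \<in> B"
    unfolding sp_iff by blast
  have "\<forall>i<n. a i \<in> A \<and> b i \<in> B \<Longrightarrow> (\<Sum>i<n. a i * b i) \<in> C" for n :: nat
    by (induction n) (auto intro: assms)
  with ab z show "z \<in> C" by blast
qed

lemma sp_one: "a \<in> A \<Longrightarrow> b \<in> B \<Longrightarrow> a * b \<in> submod_prod A B"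
  unfolding submod_prod_def
  by (rule CollectI, rule exI[of _ 1], rule exI[of _ "\<lambda>_. a"], rule exI[of _ "\<lambda>_. b"]) auto

lemma sp_zero: "0 \<in> submod_prod A B"
  unfolding submod_prod_def by (rule CollectI, rule exI[of _ 0]) auto

lemma sp_add1:
  assumes "x \<in> submod_prod A B" "a \<in> A" "b \<in> B"
  shows "x + a * b \<in> submod_prod A B"
proof -
  obtain n :: nat and f g where x: "x = (\<Sum>i<n. f i * g i)" and fg: "\<forall>i<n. f i \<in> A \<and> g i \<in> B"
    using assms(1) unfolding sp_iff by blast
  let ?f = "f(n := a)" and ?g = "g(n := b)"
  have "x + a * b = (\<Sum>i<Suc n. ?f i * ?g i)"
    by (simp add: x)
  moreover have "\<forall>i<Suc n. ?f i \<in> A \<and> ?g i \<in> B" using fg assms by (auto simp: less_Suc_eq)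
  ultimately show ?thesis unfolding sp_iff by blast
qed

lemma sp_add:
  assumes "x \<in> submod_prod A B" "y \<in> submod_prod A B"
  shows "x + y \<in> submod_prod A B"
proof -
  obtain n :: nat and f g where y: "y = (\<Sum>i<n. f i * g i)" and fg: "\<forall>i<n. f i \<in> A \<and> g i \<in> B"
    using assms(2) unfolding sp_iff by blast
  have "\<forall>i<n. f i \<in> A \<and> g i \<in> B \<Longrightarrow> x + (\<Sum>i<n. f i * g i) \<in> submod_prod A B" for n :: nat
  proof (induction n)
    case 0 then show ?case using assms(1) by simp
  next
    case (Suc n)
    then have "x + (\<Sum>i<n. f i * g i) + f n * g n \<in> submod_prod A B"
      by (intro sp_add1) auto
    then show ?case by (simp add: add.assoc)
  qed
  then show ?thesis using fg y by blast
qed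

lemma sp_mono: "A \<subseteq> A' \<Longrightarrow> B \<subseteq> B' \<Longrightarrow> submod_prod A B \<subseteq> submod_prod A' B'"
  unfolding submod_prod_def by blast

lemma sp_smult:
  assumes "x \<in> submod_prod A B" "\<And>b. b \<in> B \<Longrightarrow> s * b \<in> B"
  shows "s * x \<in> submod_prod A B"
proof -
  obtain n :: nat and f g where x: "x = (\<Sum>i<n. f i * g i)" and fg: "\<forall>i<n. f i \<in> A \<and> g i \<in> B"
    using assms(1) unfolding sp_iff by blast
  have "s * x = (\<Sum>i<n. f i * (s * g i))" by (simp add: x sum_distrib_left mult.left_commute)
  moreover have "\<forall>i<n. f i \<in> A \<and> s * g i \<in> B" using fg assms(2) by auto
  ultimately show ?thesis unfolding sp_iff
    by (intro exI[of _ n] exI[of _ f] exI[of _ "\<lambda>i. s * g i"]) simp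
qed

lemma sp_smult_left:
  assumes "x \<in> submod_prod A B" "\<And>a. a \<in> A \<Longrightarrow> s * a \<in> A"
  shows "s * x \<in> submod_prod A B"
proof -
  obtain n :: nat and f g where x: "x = (\<Sum>i<n. f i * g i)" and fg: "\<forall>i<n. f i \<in> A \<and> g i \<in> B"
    using assms(1) unfolding sp_iff by blast
  have "s * x = (\<Sum>i<n. (s * f i) * g i)" by (simp add: x sum_distrib_left mult.assoc)
  moreover have "\<forall>i<n. s * f i \<in> A \<and> g i \<in> B" using fg assms(2) by auto
  ultimately show ?thesis unfolding sp_iff
    by (intro exI[of _ n] exI[of _ "\<lambda>i. s * f i"] exI[of _ g]) simp
qed

section \<open>subrings, subfields\<close>

lemma subringD:
  assumes "is_subring D"
  shows "0 \<in> D" "1 \<in> D" "x \<in> D \<Longrightarrow> y \<in> D \<Longrightarrow> x + y \<in> D"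
    "x \<in> D \<Longrightarrow> y \<in> D \<Longrightarrow> x - y \<in> D" "x \<in> D \<Longrightarrow> y \<in> D \<Longrightarrow> x * y \<in> D"
  using assms unfolding is_subring_def by auto

lemma subring_uminus: "is_subring D \<Longrightarrow> x \<in> D \<Longrightarrow> - x \<in> D"
  by (metis subringD(1) subringD(4) diff_0)

lemma subring_sum: "is_subring D \<Longrightarrow> (\<And>i. i \<in> I \<Longrightarrow> f i \<in> D) \<Longrightarrow> sum f I \<in> D"
  by (induction I rule: infinite_finite_induct) (auto intro: subringD)

lemma subring_power: "is_subring D \<Longrightarrow> x \<in> D \<Longrightarrow> x ^ k \<in> D"
  by (induction k) (auto intro: subringD)

lemma sp_subring: "is_subring V \<Longrightarrow> A \<subseteq> V \<Longrightarrow> B \<subseteq> V \<Longrightarrow> submod_prod A B \<subseteq> V"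
  by (rule sp_sub) (auto intro: subringD)

definition subfield :: "'a::field set \<Rightarrow> bool" where
  "subfield K \<longleftrightarrow> is_subring K \<and> (\<forall>x\<in>K. inverse x \<in> K)"

lemma subfield_inv: "subfield K \<Longrightarrow> x \<in> K \<Longrightarrow> inverse x \<in> K"
  unfolding subfield_def by auto

lemma subfield_div: "subfield K \<Longrightarrow> x \<in> K \<Longrightarrow> y \<in> K \<Longrightarrow> x / y \<in> K"
  unfolding subfield_def by (auto simp: divide_inverse intro: subringD)

lemma qfieldI: "x \<in> D \<Longrightarrow> y \<in> D \<Longrightarrow> y \<noteq> 0 \<Longrightarrow> x / y \<in> qfield D"
  unfolding qfield_def by blast

lemma qfield_subfield:
  assumes D: "is_subring D" shows "subfield (qfield D)"
proof -
  have a: "x / y + x' / y' \<in> qfield D" if "x \<in> D" "y \<in> D" "x' \<in> D" "y' \<in> D" "y \<noteq> 0" "y' \<noteq> 0"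
    for x y x' y'
  proof -
    have "x / y + x' / y' = (x * y' + x' * y) / (y * y')" using that by (simp add: field_simps)
    then show ?thesis using that by (auto intro!: qfieldI subringD[OF D])
  qed
  have m: "(x / y) * (x' / y') \<in> qfield D" if "x \<in> D" "y \<in> D" "x' \<in> D" "y' \<in> D" "y \<noteq> 0" "y' \<noteq> 0"
    for x y x' y'
  proof -
    have "(x / y) * (x' / y') = (x * x') / (y * y')" using that by (simp add: field_simps)
    then show ?thesis using that by (auto intro!: qfieldI subringD[OF D])
  qed
  have s: "x / y - x' / y' \<in> qfield D" if "x \<in> D" "y \<in> D" "x' \<in> D" "y' \<in> D" "y \<noteq> 0" "y' \<noteq> 0"
    for x y x' y'
  proof -
    have "x / y - x' / y' = (x * y' - x' * y) / (y * y')" using that by (simp add: field_simps)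
    then show ?thesis using that by (auto intro!: qfieldI subringD[OF D])
  qed
  have i: "inverse (x / y) \<in> qfield D" if "x \<in> D" "y \<in> D" "y \<noteq> 0" for x y
  proof (cases "x = 0")
    case True then show ?thesis using that unfolding qfield_def by auto
  next
    case False
    have "inverse (x / y) = y / x" by simp
    then show ?thesis unfolding qfield_def using that False by blast
  qed
  have z: "0 \<in> qfield D" "1 \<in> qfield D"
    using qfieldI[of 0 D 1] qfieldI[of 1 D 1] subringD(1,2)[OF D] by auto
  have E: "\<exists>x y. z = x / y \<and> x \<in> D \<and> y \<in> D \<and> y \<noteq> 0" if "z \<in> qfield D" for z
    using that unfolding qfield_def by blast
  show ?thesis unfolding subfield_def is_subring_def
  proof (intro conjI ballI)
    fix u v assume "u \<in> qfield D" "v \<in> qfield D"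
    then obtain x y x' y' where "u = x / y" "x \<in> D" "y \<in> D" "y \<noteq> 0"
       "v = x' / y'" "x' \<in> D" "y' \<in> D" "y' \<noteq> 0" using E by meson
    then show "u + v \<in> qfield D" "u - v \<in> qfield D" "u * v \<in> qfield D"
      using a m s by auto
  next
    fix u assume "u \<in> qfield D"
    then obtain x y where "u = x / y" "x \<in> D" "y \<in> D" "y \<noteq> 0" using E by meson
    then show "inverse u \<in> qfield D" using i by auto
  qed (use z in auto)
qed

lemma D_sub_qfield: "is_subring D \<Longrightarrow> D \<subseteq> qfield D"
  unfolding qfield_def using subringD(2) by force

section \<open>valuation rings\<close>

definition valring :: "'a::field set \<Rightarrow> 'a set \<Rightarrow> bool" where
  "valring K V \<longleftrightarrow> is_subring V \<and> V \<subseteq> K \<and> (\<forall>x\<in>K. x \<noteq> 0 \<longrightarrow> x \<in> V \<or> inverse x \<in> V)"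

definition maxv :: "'a::field set \<Rightarrow> 'a set" where
  "maxv V = {v\<in>V. v = 0 \<or> inverse v \<notin> V}"

lemma maxv_sub: "maxv V \<subseteq> V" unfolding maxv_def by auto

lemma one_notin_maxv: "1 \<notin> maxv V" unfolding maxv_def by auto

lemma notin_maxv: "v \<in> V \<Longrightarrow> v \<notin> maxv V \<Longrightarrow> v \<noteq> 0 \<and> inverse v \<in> V"
  unfolding maxv_def by auto

lemma maxv_mult:
  assumes "is_subring V" "t \<in> V" "x \<in> maxv V" shows "t * x \<in> maxv V"
proof -
  have x: "x \<in> V" "x = 0 \<or> inverse x \<notin> V" using assms(3) unfolding maxv_def by auto
  have "t * x \<in> V" using assms x by (auto intro: subringD)
  moreover have "t * x = 0 \<or> inverse (t * x) \<notin> V"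
  proof (rule ccontr)
    assume "\<not> ?thesis"
    then have "t * x \<noteq> 0" "inverse (t * x) \<in> V" by auto
    then have "t * inverse (t * x) \<in> V" using assms by (auto intro: subringD)
    moreover have "t * inverse (t * x) = inverse x" using \<open>t * x \<noteq> 0\<close> by (simp add: field_simps)
    ultimately have "inverse x \<in> V" by metis
    then show False using x \<open>t * x \<noteq> 0\<close> by auto
  qed
  ultimately show ?thesis unfolding maxv_def by auto
qed

lemma maxv_add:
  assumes K: "subfield K" and V: "valring K V" and x: "x \<in> maxv V" and y: "y \<in> maxv V"
  shows "x + y \<in> maxv V"
proof -
  have sV: "is_subring V" and VK: "V \<subseteq> K" using V unfolding valring_def by auto
  have xV: "x \<in> V" and yV: "y \<in> V" using x y maxv_sub by auto
  show ?thesis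
  proof (cases "x = 0 \<or> y = 0")
    case True then show ?thesis using x y by auto
  next
    case False
    have "x / y \<in> K" using subfield_div[OF K] xV yV VK by auto
    moreover have "x / y \<noteq> 0" using False by auto
    ultimately have "x / y \<in> V \<or> inverse (x / y) \<in> V" using V unfolding valring_def by auto
    then show ?thesis
    proof
      assume h: "x / y \<in> V"
      have "x + y = (1 + x / y) * y" using False by (simp add: field_simps)
      moreover have "1 + x / y \<in> V" using h sV by (auto intro: subringD)
      ultimately show ?thesis using maxv_mult[OF sV _ y] by auto
    next
      assume h: "inverse (x / y) \<in> V"
      have "x + y = (1 + inverse (x / y)) * x" using False by (simp add: field_simps)
      moreover have "1 + inverse (x / y) \<in> V" using h sV by (auto intro: subringD)
      ultimately show ?thesis using maxv_mult[OF sV _ x] by auto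
    qed
  qed
qed

lemma maxv_prime:
  assumes K: "subfield K" and V: "valring K V"
  shows "prime_ideal V (maxv V)"
proof -
  have sV: "is_subring V" using V unfolding valring_def by auto
  have m1: "- 1 \<in> V" using subring_uminus[OF sV subringD(2)[OF sV]] .
  have ideal: "is_ideal V (maxv V)"
    unfolding is_ideal_def
  proof (intro conjI ballI)
    show "maxv V \<subseteq> V" by (rule maxv_sub)
    show "0 \<in> maxv V" unfolding maxv_def using subringD(1)[OF sV] by auto
  next
    fix x y assume "x \<in> maxv V" "y \<in> maxv V"
    then show "x + y \<in> maxv V" using maxv_add[OF K V] by auto
    have "(- 1) * y \<in> maxv V" by (rule maxv_mult[OF sV m1 \<open>y \<in> maxv V\<close>])
    then have "x + (- 1) * y \<in> maxv V" using maxv_add[OF K V] \<open>x \<in> maxv V\<close> by blast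
    moreover have "x + (- 1) * y = x - y" by simp
    ultimately show "x - y \<in> maxv V" by metis
  next
    fix t x assume "t \<in> V" "x \<in> maxv V"
    then show "t * x \<in> maxv V" by (rule maxv_mult[OF sV])
  qed
  moreover have "maxv V \<noteq> V" using one_notin_maxv subringD(2)[OF sV] by blast
  moreover have "x \<in> maxv V \<or> y \<in> maxv V" if "x \<in> V" "y \<in> V" "x * y \<in> maxv V" for x y
  proof (rule ccontr)
    assume "\<not> ?thesis"
    then have "x \<noteq> 0" "y \<noteq> 0" "inverse x \<in> V" "inverse y \<in> V" using that unfolding maxv_def by auto
    then have "inverse (x * y) \<in> V" using sV by (auto intro: subringD simp: mult.commute)
    then show False using that \<open>x \<noteq> 0\<close> \<open>y \<noteq> 0\<close> unfolding maxv_def by auto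
  qed
  ultimately show ?thesis unfolding prime_ideal_def by blast
qed

lemma prime_one: "is_subring T \<Longrightarrow> prime_ideal T P \<Longrightarrow> 1 \<notin> P"
  unfolding prime_ideal_def is_ideal_def
  by (metis mult.right_neutral subringD(2) subset_antisym subsetI)

lemma prime_sub_maxv:
  assumes "is_subring W" "prime_ideal W Q" shows "Q \<subseteq> maxv W"
proof
  fix q assume q: "q \<in> Q"
  have qW: "q \<in> W" using assms q unfolding prime_ideal_def is_ideal_def by auto
  show "q \<in> maxv W"
  proof (rule ccontr)
    assume "q \<notin> maxv W"
    then have "q \<noteq> 0" "inverse q \<in> W" using notin_maxv qW by auto
    then have "inverse q * q \<in> Q" using assms q unfolding prime_ideal_def is_ideal_def by blast
    moreover have "inverse q * q = 1" using \<open>q \<noteq> 0\<close> by simp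
    ultimately show False using prime_one[OF assms] by simp
  qed
qed



definition adj :: "'a::field set \<Rightarrow> 'a \<Rightarrow> 'a set" where
  "adj S y = {poly p y | p. \<forall>i. coeff p i \<in> S}"

lemma poly_in_set:
  assumes "0 \<in> C" "\<And>a b. a \<in> C \<Longrightarrow> b \<in> C \<Longrightarrow> a + b \<in> C" "\<And>c. c \<in> C \<Longrightarrow> y * c \<in> C"
    and "\<forall>i. coeff p i \<in> C"
  shows "poly p y \<in> C"
  using assms(4)
proof (induction p)
  case 0 then show ?case using assms(1) by simp
next
  case (pCons a p)
  have "\<forall>i. coeff p i \<in> C" using pCons.prems by (metis coeff_pCons_Suc)
  then have "poly p y \<in> C" using pCons.IH by blast
  moreover have "a \<in> C" using pCons.prems by (metis coeff_pCons_0)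
  ultimately show ?case using assms(2,3) by simp
qed

lemma adjI: "\<forall>i. coeff p i \<in> S \<Longrightarrow> poly p y \<in> adj S y"
  unfolding adj_def by blast

lemma adjE: "z \<in> adj S y \<Longrightarrow> \<exists>p. z = poly p y \<and> (\<forall>i. coeff p i \<in> S)"
  unfolding adj_def by blast

lemma adj_subring:
  assumes S: "is_subring S" shows "is_subring (adj S y)"
proof -
  have m: "\<forall>i. coeff (p * q) i \<in> S" if "\<forall>i. coeff p i \<in> S" "\<forall>i. coeff q i \<in> S" for p q
  proof
    fix n
    show "coeff (p * q) n \<in> S" unfolding coeff_mult
      by (rule subring_sum[OF S]) (use that in \<open>blast intro: subringD(5)[OF S]\<close>)
  qed
  have z: "\<forall>i. coeff (0::'a poly) i \<in> S" using subringD(1)[OF S] by simp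
  have o: "\<forall>i. coeff (1::'a poly) i \<in> S" using subringD(1,2)[OF S] by simp
  show ?thesis unfolding is_subring_def
  proof (intro conjI ballI)
    show "0 \<in> adj S y" using adjI[OF z, of y] by simp
    show "1 \<in> adj S y" using adjI[OF o, of y] by simp
  next
    fix a b assume "a \<in> adj S y" "b \<in> adj S y"
    then obtain p q where pq: "a = poly p y" "b = poly q y" "\<forall>i. coeff p i \<in> S" "\<forall>i. coeff q i \<in> S"
      using adjE by metis
    have "\<forall>i. coeff (p + q) i \<in> S" "\<forall>i. coeff (p - q) i \<in> S"
      using pq by (auto intro: subringD[OF S])
    moreover have "\<forall>i. coeff (p * q) i \<in> S" using m pq by blast
    ultimately show "a + b \<in> adj S y" "a - b \<in> adj S y" "a * b \<in> adj S y"
      using adjI[of "p + q" S y] adjI[of "p - q" S y] adjI[of "p * q" S y] pq by auto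
  qed
qed

lemma adj_sup: assumes S: "is_subring S" shows "S \<subseteq> adj S y"
proof
  fix s assume s: "s \<in> S"
  have "\<forall>i. coeff [:s:] i \<in> S" using s subringD(1)[OF S] by (simp add: coeff_pCons')
  then show "s \<in> adj S y" using adjI[of "[:s:]" S y] by simp
qed

lemma adj_y: assumes S: "is_subring S" shows "y \<in> adj S y"
proof -
  have "\<forall>i. coeff [:0, 1:] i \<in> S" using subringD(1,2)[OF S] by (simp add: coeff_pCons')
  then show ?thesis using adjI[of "[:0, 1:]" S y] by simp
qed

lemma adj_K:
  assumes K: "subfield K" and SK: "S \<subseteq> K" and y: "y \<in> K" shows "adj S y \<subseteq> K"
proof
  fix z assume "z \<in> adj S y"
  then obtain p where z: "z = poly p y" "\<forall>i. coeff p i \<in> S" using adjE by metis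
  have KK: "is_subring K" using K unfolding subfield_def by auto
  show "z \<in> K" unfolding z(1)
    by (rule poly_in_set) (use z(2) SK y in \<open>auto intro: subringD[OF KK]\<close>)
qed

lemma adj_prod:
  assumes S: "is_subring S" and z: "z \<in> submod_prod P (adj S y)"
  shows "\<exists>p. (\<forall>i. coeff p i \<in> submod_prod P S) \<and> poly p y = z"
proof -
  let ?C = "{poly p y | p. \<forall>i. coeff p i \<in> submod_prod P S}"
  have "submod_prod P (adj S y) \<subseteq> ?C"
  proof (rule sp_sub)
    have "poly 0 y = (0::'a)" "\<forall>i. coeff (0::'a poly) i \<in> submod_prod P S" using sp_zero by auto
    then show "0 \<in> ?C" unfolding mem_Collect_eq by (intro exI[of _ 0]) simp
  next
    fix a b assume "a \<in> ?C" "b \<in> ?C"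
    then obtain p q where pq: "a = poly p y" "b = poly q y" "\<forall>i. coeff p i \<in> submod_prod P S"
      "\<forall>i. coeff q i \<in> submod_prod P S" by blast
    have "a + b = poly (p + q) y" using pq by simp
    moreover have "\<forall>i. coeff (p + q) i \<in> submod_prod P S" using pq sp_add by (simp add: sp_add)
    ultimately show "a + b \<in> ?C" by blast
  next
    fix a b assume a: "a \<in> P" and "b \<in> adj S y"
    then obtain q where q: "b = poly q y" "\<forall>i. coeff q i \<in> S" using adjE by metis
    have "a * b = poly (smult a q) y" using q by simp
    moreover have "\<forall>i. coeff (smult a q) i \<in> submod_prod P S" using q a by (simp add: sp_one)
    ultimately show "a * b \<in> ?C" by blast
  qed
  then show ?thesis using z by blast
qed

locale ideal_data =
  fixes S I :: "'a::field set"
  assumes S: "is_subring S"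
    and I0: "0 \<in> I" and Iadd: "\<And>a b. a \<in> I \<Longrightarrow> b \<in> I \<Longrightarrow> a + b \<in> I"
    and Idiff: "\<And>a b. a \<in> I \<Longrightarrow> b \<in> I \<Longrightarrow> a - b \<in> I"
    and Imul: "\<And>s a. s \<in> S \<Longrightarrow> a \<in> I \<Longrightarrow> s * a \<in> I"
    and IS: "I \<subseteq> S" and I1: "1 \<notin> I"
    and Iu: "\<And>c. c \<in> I \<Longrightarrow> inverse (1 - c) \<in> S"
begin

lemma KD:
  assumes x: "x \<noteq> 0" and p: "\<forall>i. coeff p i \<in> I" "poly p x = 1"
    and q: "\<forall>i. coeff q i \<in> I" "poly q (inverse x) = 1" and le: "degree q \<le> degree p"
  shows "\<exists>p'. (\<forall>i. coeff p' i \<in> I) \<and> poly p' x = 1 \<and> degree p' < degree p"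
proof -
  define l where "l = degree q"
  define k where "k = degree p"
  have l0: "l \<noteq> 0"
  proof
    assume "l = 0"
    then have "q = [:coeff q 0:]" using degree_0_id l_def by metis
    then have "poly q (inverse x) = coeff q 0" by (metis add.right_neutral mult_zero_right poly_0 poly_pCons)
    then show False using q I1 by (metis (no_types))
  qed
  have lk: "l \<le> k" using le l_def k_def by simp
  define q0 where "q0 = coeff q 0"
  have q0I: "q0 \<in> I" using q q0_def by auto
  define u where "u = 1 - q0"
  have u0: "u \<noteq> 0" using q0I I1 u_def by auto
  define iu where "iu = inverse u"
  have iuS: "iu \<in> S" using Iu q0I iu_def u_def by simp
  define r where "r = reflect_poly q"
  have pr: "poly r x = x ^ l" using poly_reflect_poly_nz[OF x, of q] q r_def l_def by simp
  define g where "g = r - monom q0 l"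
  have pg: "poly g x = u * x ^ l" unfolding g_def u_def using pr by (simp add: poly_monom algebra_simps)
  have cg: "coeff g j = (if j > l then 0 else coeff q (l - j)) - (if l = j then q0 else 0)" for j
    unfolding g_def r_def l_def by (simp add: coeff_reflect_poly)
  have cgI: "coeff g j \<in> I" for j unfolding cg using q q0I I0 by (auto intro!: Idiff)
  have cg0: "coeff g j = 0" if "j \<ge> l" for j using that unfolding cg q0_def by auto
  define a where "a = coeff p k"
  have aI: "a \<in> I" using p a_def by auto
  define h where "h = monom 1 (k - l) * g"
  have ph: "poly h x = u * x ^ k" unfolding h_def using pg lk
    by (simp add: poly_monom algebra_simps flip: power_add)
  have ch: "coeff h i = (if i < k - l then 0 else coeff g (i - (k - l)))" for i
    unfolding h_def by (simp add: coeff_monom_mult)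
  have chI: "coeff h i \<in> I" for i unfolding ch using I0 cgI by auto
  define p' where "p' = p - monom a k + smult (a * iu) h"
  have "poly p' x = 1 - a * x ^ k + a * iu * (u * x ^ k)"
    unfolding p'_def using p ph by (simp add: poly_monom)
  also have "\<dots> = 1" using u0 iu_def by (simp add: field_simps)
  finally have pp: "poly p' x = 1" .
  have aiu: "a * iu \<in> S" using aI IS iuS by (auto intro: subringD[OF S])
  have cp': "coeff p' i = coeff p i - (if k = i then a else 0) + a * iu * coeff h i" for i
    unfolding p'_def by simp
  have cpI: "coeff p' i \<in> I" for i
    unfolding cp' using p aI I0 aiu chI by (auto intro!: Iadd Idiff Imul)
  have "coeff p' i = 0" if "i > k - 1" for i
  proof -
    have ik: "i \<ge> k" using that l0 lk by linarith
    have "coeff h i = 0" unfolding ch using cg0 ik lk by auto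
    moreover have "coeff p i = (if k = i then a else 0)"
      using ik a_def coeff_eq_0[of p i] k_def by (cases "k = i") auto
    ultimately show ?thesis unfolding cp' by simp
  qed
  then have "degree p' \<le> k - 1" by (intro degree_le) auto
  then have "degree p' < degree p" using l0 lk k_def by linarith
  then show ?thesis using pp cpI by blast
qed

lemma no_both:
  assumes "x \<noteq> 0" "\<forall>i. coeff p i \<in> I" "poly p x = 1"
    "\<forall>i. coeff q i \<in> I" "poly q (inverse x) = 1"
  shows False
proof -
  have "\<And>x p q. x \<noteq> 0 \<Longrightarrow> (\<forall>i. coeff p i \<in> I) \<Longrightarrow> poly p x = 1 \<Longrightarrow>
    (\<forall>i. coeff q i \<in> I) \<Longrightarrow> poly q (inverse x) = 1 \<Longrightarrow> degree p + degree q = N \<Longrightarrow> False" for N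
  proof (induction N rule: less_induct)
    case (less N x p q)
    show False
    proof (cases "degree q \<le> degree p")
      case True
      then obtain p' where "\<forall>i. coeff p' i \<in> I" "poly p' x = 1" "degree p' < degree p"
        using KD less.prems by blast
      then show False using less.IH[of "degree p' + degree q" x p' q] less.prems by auto
    next
      case False
      have "inverse x \<noteq> 0" "poly p (inverse (inverse x)) = 1" using less.prems by auto
      then obtain q' where "\<forall>i. coeff q' i \<in> I" "poly q' (inverse x) = 1" "degree q' < degree q"
        using KD[of "inverse x" q p] less.prems False by auto
      then show False using less.IH[of "degree p + degree q'" x p q'] less.prems by auto
    qed
  qed
  then show False using assms by blast
qed

end



lemma chevalley:
  fixes K R P :: "'a::field set"
  assumes K: "subfield K" and R: "is_subring R" and RK: "R \<subseteq> K" and P: "prime_ideal R P"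
  shows "\<exists>V. valring K V \<and> R \<subseteq> V \<and> maxv V \<inter> R = P"
proof -
  have PR: "P \<subseteq> R" and P0: "0 \<in> P" and Pmul: "\<And>t x. t \<in> R \<Longrightarrow> x \<in> P \<Longrightarrow> t * x \<in> P"
    and Padd: "\<And>x y. x \<in> P \<Longrightarrow> y \<in> P \<Longrightarrow> x + y \<in> P"
    and Ppr: "\<And>x y. x \<in> R \<Longrightarrow> y \<in> R \<Longrightarrow> x * y \<in> P \<Longrightarrow> x \<in> P \<or> y \<in> P"
    using P unfolding prime_ideal_def is_ideal_def by auto
  have P1: "1 \<notin> P" using prime_one[OF R P] .
  have KK: "is_subring K" using K unfolding subfield_def by auto
  define Rp where "Rp = {r / s | r s. r \<in> R \<and> s \<in> R \<and> s \<notin> P}"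
  have RpI: "r / s \<in> Rp" if "r \<in> R" "s \<in> R" "s \<notin> P" for r s
    unfolding Rp_def using that by blast
  have RpE: "\<exists>r s. z = r / s \<and> r \<in> R \<and> s \<in> R \<and> s \<notin> P" if "z \<in> Rp" for z
    using that unfolding Rp_def by blast
  have s0: "s \<noteq> 0" if "s \<notin> P" for s using that P0 by auto
  have RRp: "R \<subseteq> Rp"
  proof
    fix r assume "r \<in> R" then show "r \<in> Rp" using RpI[of r 1] subringD(2)[OF R] P1 by simp
  qed
  have Rpsub: "is_subring Rp" unfolding is_subring_def
  proof (intro conjI ballI)
    show "0 \<in> Rp" "1 \<in> Rp" using RRp subringD(1,2)[OF R] by auto
  next
    fix a b assume "a \<in> Rp" "b \<in> Rp"
    then obtain r s r' s' where rs: "a = r / s" "r \<in> R" "s \<in> R" "s \<notin> P"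
      "b = r' / s'" "r' \<in> R" "s' \<in> R" "s' \<notin> P" using RpE by metis
    have ss: "s * s' \<in> R" "s * s' \<notin> P" using rs Ppr subringD(5)[OF R] by auto
    have e: "a + b = (r * s' + r' * s) / (s * s')" "a - b = (r * s' - r' * s) / (s * s')"
      "a * b = (r * r') / (s * s')" using rs s0 by (auto simp: field_simps)
    have "r * s' \<in> R" "r' * s \<in> R" "r * r' \<in> R" using rs subringD(5)[OF R] by auto
    then have "r * s' + r' * s \<in> R" "r * s' - r' * s \<in> R" using subringD(3,4)[OF R] by auto
    then show "a + b \<in> Rp" "a - b \<in> Rp" "a * b \<in> Rp"
      using RpI[OF _ ss] \<open>r * r' \<in> R\<close> unfolding e by auto
  qed
  have RpK: "Rp \<subseteq> K"
  proof
    fix z assume "z \<in> Rp"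
    then obtain r s where "z = r / s" "r \<in> R" "s \<in> R" using RpE by metis
    then show "z \<in> K" using subfield_div[OF K, of r s] RK by blast
  qed
  have Rp1: "1 \<notin> submod_prod P Rp"
  proof -
    define C where "C = {p / s | p s. p \<in> P \<and> s \<in> R \<and> s \<notin> P}"
    have CE: "\<exists>p s. z = p / s \<and> p \<in> P \<and> s \<in> R \<and> s \<notin> P" if "z \<in> C" for z
      using that unfolding C_def by blast
    have CI: "p / s \<in> C" if "p \<in> P" "s \<in> R" "s \<notin> P" for p s
      unfolding C_def using that by blast
    have "submod_prod P Rp \<subseteq> C"
    proof (rule sp_sub)
      show "0 \<in> C" using CI[of 0 1] P0 P1 subringD(2)[OF R] by simp
    next
      fix a b assume "a \<in> C" "b \<in> C"
      then obtain r s r' s' where rs: "a = r / s" "r \<in> P" "s \<in> R" "s \<notin> P"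
        "b = r' / s'" "r' \<in> P" "s' \<in> R" "s' \<notin> P" using CE by metis
      have ss: "s * s' \<in> R" "s * s' \<notin> P" using rs Ppr subringD(5)[OF R] by auto
      have "a + b = (s' * r + s * r') / (s * s')" using rs s0 by (auto simp: field_simps)
      moreover have "s' * r + s * r' \<in> P" using rs by (intro Padd Pmul) auto
      ultimately show "a + b \<in> C" using CI ss by auto
    next
      fix a b assume a: "a \<in> P" and "b \<in> Rp"
      then obtain r s where rs: "b = r / s" "r \<in> R" "s \<in> R" "s \<notin> P" using RpE by metis
      have "a * b = (r * a) / s" using rs by simp
      moreover have "r * a \<in> P" using rs a Pmul by auto
      ultimately show "a * b \<in> C" using CI[of "r * a" s] rs by (simp add: mult.commute)
    qed
    moreover have "1 \<notin> C"
    proof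
      assume "1 \<in> C"
      then obtain p s where "1 = p / s" "p \<in> P" "s \<notin> P" using CE by metis
      then have "p = s" using s0[OF \<open>s \<notin> P\<close>] by (simp add: field_simps)
      then show False using \<open>p \<in> P\<close> \<open>s \<notin> P\<close> by simp
    qed
    ultimately show ?thesis by blast
  qed
  define Fam where "Fam = {S. is_subring S \<and> Rp \<subseteq> S \<and> S \<subseteq> K \<and> 1 \<notin> submod_prod P S}"
  have "\<exists>M\<in>Fam. \<forall>X\<in>Fam. M \<subseteq> X \<longrightarrow> X = M"
  proof (rule subset_Zorn_nonempty)
    show "Fam \<noteq> {}" using Rpsub RpK Rp1 unfolding Fam_def by blast
  next
    fix C assume Cne: "C \<noteq> {}" and ch: "subset.chain Fam C"
    have CF: "C \<subseteq> Fam" and cmp: "\<And>X Y. X \<in> C \<Longrightarrow> Y \<in> C \<Longrightarrow> X \<subseteq> Y \<or> Y \<subseteq> X"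
      using ch unfolding subset_chain_def by auto
    have two: "\<exists>S\<in>C. x \<in> S \<and> y \<in> S" if "x \<in> \<Union>C" "y \<in> \<Union>C" for x y
      using that cmp by blast
    have sub: "is_subring (\<Union>C)" unfolding is_subring_def
    proof (intro conjI ballI)
      obtain S0 where "S0 \<in> C" using Cne by blast
      then have "is_subring S0" using CF unfolding Fam_def by auto
      then show "0 \<in> \<Union>C" "1 \<in> \<Union>C" using \<open>S0 \<in> C\<close> subringD(1,2) by blast+
    next
      fix x y assume "x \<in> \<Union>C" "y \<in> \<Union>C"
      then obtain S where S: "S \<in> C" "x \<in> S" "y \<in> S" using two by blast
      then have "is_subring S" using CF unfolding Fam_def by auto
      then show "x + y \<in> \<Union>C" "x - y \<in> \<Union>C" "x * y \<in> \<Union>C" using S subringD by blast+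
    qed
    have "Rp \<subseteq> \<Union>C" using Cne CF unfolding Fam_def by blast
    moreover have "\<Union>C \<subseteq> K" using CF unfolding Fam_def by blast
    moreover have "1 \<notin> submod_prod P (\<Union>C)"
    proof
      assume "1 \<in> submod_prod P (\<Union>C)"
      then obtain n :: nat and a b where ab: "1 = (\<Sum>i<n. a i * b i)" "\<forall>i<n. a i \<in> P \<and> b i \<in> \<Union>C"
        unfolding sp_iff by blast
      have "finite (b ` {..<n})" "b ` {..<n} \<subseteq> \<Union>C" using ab by auto
      then obtain S where S: "S \<in> C" "b ` {..<n} \<subseteq> S"
        using finite_subset_Union_chain[OF _ _ Cne ch] by metis
      then have "1 \<in> submod_prod P S" unfolding sp_iff using ab by blast
      then show False using S CF unfolding Fam_def by blast
    qed
    ultimately show "\<Union>C \<in> Fam" using sub unfolding Fam_def by blast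
  qed
  then obtain S0 where S0F: "S0 \<in> Fam" and S0max: "\<And>X. X \<in> Fam \<Longrightarrow> S0 \<subseteq> X \<Longrightarrow> X = S0"
    by blast
  have S0: "is_subring S0" "Rp \<subseteq> S0" "S0 \<subseteq> K" "1 \<notin> submod_prod P S0"
    using S0F unfolding Fam_def by auto
  define I where "I = submod_prod P S0"
  have PS0: "P \<subseteq> S0" using PR RRp S0(2) by blast
  have IS: "I \<subseteq> S0" unfolding I_def using sp_subring[OF S0(1) PS0] by blast
  have I0: "0 \<in> I" unfolding I_def by (rule sp_zero)
  have Iadd: "a + b \<in> I" if "a \<in> I" "b \<in> I" for a b using that sp_add unfolding I_def by blast
  have Imul: "s * a \<in> I" if "s \<in> S0" "a \<in> I" for s a
    using that unfolding I_def by (intro sp_smult) (auto intro: subringD(5)[OF S0(1)])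
  have m1: "- 1 \<in> S0" using subring_uminus[OF S0(1) subringD(2)[OF S0(1)]] .
  have Idiff: "a - b \<in> I" if "a \<in> I" "b \<in> I" for a b
  proof -
    have "a + (- 1) * b \<in> I" using that Iadd Imul m1 by blast
    then show ?thesis by simp
  qed
  have I1: "1 \<notin> I" using S0(4) I_def by simp
  have key: "\<exists>p. (\<forall>i. coeff p i \<in> I) \<and> poly p y = 1" if "y \<in> K" "y \<notin> S0" for y
  proof -
    have ad: "is_subring (adj S0 y)" "Rp \<subseteq> adj S0 y" "adj S0 y \<subseteq> K"
      using adj_subring[OF S0(1)] adj_sup[OF S0(1)] S0(2) adj_K[OF K S0(3) that(1)] by auto
    have "1 \<in> submod_prod P (adj S0 y)"
    proof (rule ccontr)
      assume "1 \<notin> submod_prod P (adj S0 y)"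
      then have "adj S0 y \<in> Fam" using ad unfolding Fam_def by blast
      then have "adj S0 y = S0" using S0max adj_sup[OF S0(1)] by blast
      then show False using adj_y[OF S0(1), of y] that by simp
    qed
    then show ?thesis using adj_prod[OF S0(1)] unfolding I_def by blast
  qed
  have Iu: "inverse (1 - c) \<in> S0" if c: "c \<in> I" for c
  proof (rule ccontr)
    assume nin: "inverse (1 - c) \<notin> S0"
    define u where "u = 1 - c"
    have uS: "u \<in> S0" using c IS subringD(2,4)[OF S0(1)] u_def by blast
    have u0: "u \<noteq> 0" using c I1 u_def by auto
    have "inverse u \<in> K" using uS S0(3) subfield_inv[OF K] by blast
    then obtain p where p: "\<forall>i. coeff p i \<in> I" "poly p (inverse u) = 1" using key nin u_def by blast
    have "poly (reflect_poly p) u = u ^ degree p" using poly_reflect_poly_nz[OF u0, of p] p by simp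
    moreover have "poly (reflect_poly p) u \<in> I"
      by (rule poly_in_set) (use I0 Iadd Imul uS p in \<open>auto simp: coeff_reflect_poly\<close>)
    ultimately have uk: "u ^ degree p \<in> I" by simp
    have "u ^ k - 1 \<in> I" for k
    proof (induction k)
      case 0 then show ?case using I0 by simp
    next
      case (Suc k)
      have "u ^ Suc k - 1 = u * (u ^ k - 1) - c" unfolding u_def by (simp add: algebra_simps)
      then show ?case using Suc Imul uS Idiff c by auto
    qed
    then have "u ^ degree p - (u ^ degree p - 1) \<in> I" using uk Idiff by blast
    then show False using I1 by simp
  qed
  interpret ideal_data S0 I
    by unfold_locales (use S0(1) I0 Iadd Idiff Imul IS I1 Iu in auto)
  have val: "valring K S0" unfolding valring_def
  proof (intro conjI ballI impI)
    fix x assume x: "x \<in> K" "x \<noteq> 0"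
    show "x \<in> S0 \<or> inverse x \<in> S0"
    proof (rule ccontr)
      assume "\<not> ?thesis"
      then obtain p q where "\<forall>i. coeff p i \<in> I" "poly p x = 1" "\<forall>i. coeff q i \<in> I" "poly q (inverse x) = 1"
        using key x subfield_inv[OF K] by meson
      then show False using no_both x by blast
    qed
  qed (use S0 in auto)
  have "maxv S0 \<inter> R = P"
  proof
    show "maxv S0 \<inter> R \<subseteq> P"
    proof
      fix r assume r: "r \<in> maxv S0 \<inter> R"
      show "r \<in> P"
      proof (rule ccontr)
        assume "r \<notin> P"
        then have "1 / r \<in> Rp" using RpI[of 1 r] r subringD(2)[OF R] by auto
        then have "inverse r \<in> S0" using S0(2) by (auto simp: divide_inverse)
        then show False using r \<open>r \<notin> P\<close> s0 unfolding maxv_def by auto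
      qed
    qed
  next
    show "P \<subseteq> maxv S0 \<inter> R"
    proof
      fix p assume p: "p \<in> P"
      have "p \<in> maxv S0"
      proof (rule ccontr)
        assume "p \<notin> maxv S0"
        then have "p \<noteq> 0" "inverse p \<in> S0" using notin_maxv PS0 p by auto
        then have "p * inverse p \<in> I" unfolding I_def using sp_one p by blast
        then show False using I1 \<open>p \<noteq> 0\<close> by simp
      qed
      then show "p \<in> maxv S0 \<inter> R" using p PR by auto
    qed
  qed
  moreover have "R \<subseteq> S0" using RRp S0(2) by blast
  ultimately show ?thesis using val by blast
qed



lemma ideal_props:
  assumes "is_ideal T P"
  shows "P \<subseteq> T" "0 \<in> P" "\<And>x y. x \<in> P \<Longrightarrow> y \<in> P \<Longrightarrow> x + y \<in> P"
    "\<And>x y. x \<in> P \<Longrightarrow> y \<in> P \<Longrightarrow> x - y \<in> P" "\<And>t x. t \<in> T \<Longrightarrow> x \<in> P \<Longrightarrow> t * x \<in> P"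
  using assms unfolding is_ideal_def by auto

lemma chain_step:
  fixes K T W Pm Pn :: "'a::field set"
  assumes K: "subfield K" and T: "is_subring T" and TK: "T \<subseteq> K"
    and W: "valring K W" and TW: "T \<subseteq> W" and WT: "maxv W \<inter> T = Pm"
    and Pn: "prime_ideal T Pn" and PmPn: "Pm \<subset> Pn"
  shows "\<exists>V. valring K V \<and> T \<subseteq> V \<and> V \<subseteq> W \<and> maxv W \<subset> maxv V \<and> maxv V \<inter> T = Pn"
proof -
  define MW where "MW = maxv W"
  have Wsub: "is_subring W" and WK: "W \<subseteq> K" using W unfolding valring_def by auto
  have MWi: "is_ideal W MW" using maxv_prime[OF K W] unfolding MW_def prime_ideal_def by auto
  note MWp = ideal_props[OF MWi]
  have Pni: "is_ideal T Pn" using Pn unfolding prime_ideal_def by auto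
  note Pnp = ideal_props[OF Pni]
  have Pnpr: "\<And>x y. x \<in> T \<Longrightarrow> y \<in> T \<Longrightarrow> x * y \<in> P n \<Longrightarrow> True" by simp
  have Pnprime: "x \<in> Pn \<or> y \<in> Pn" if "x \<in> T" "y \<in> T" "x * y \<in> Pn" for x y
    using Pn that unfolding prime_ideal_def by blast
  have Pn1: "1 \<notin> Pn" using prime_one[OF T Pn] .
  have MWT: "x \<in> T \<Longrightarrow> x \<in> MW \<Longrightarrow> x \<in> Pn" for x using WT PmPn MW_def by blast
  define R where "R = {t + w | t w. t \<in> T \<and> w \<in> MW}"
  define P' where "P' = {p + w | p w. p \<in> Pn \<and> w \<in> MW}"
  have RI: "t + w \<in> R" if "t \<in> T" "w \<in> MW" for t w using that unfolding R_def by blast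
  have RE: "\<exists>t w. z = t + w \<and> t \<in> T \<and> w \<in> MW" if "z \<in> R" for z using that unfolding R_def by blast
  have P'I: "t + w \<in> P'" if "t \<in> Pn" "w \<in> MW" for t w using that unfolding P'_def by blast
  have P'E: "\<exists>t w. z = t + w \<and> t \<in> Pn \<and> w \<in> MW" if "z \<in> P'" for z using that unfolding P'_def by blast
  have TR: "T \<subseteq> R" using RI[of _ 0] MWp(2) by force
  have MWR: "MW \<subseteq> R" using RI[of 0] subringD(1)[OF T] by force
  have MWP': "MW \<subseteq> P'" using P'I[of 0] Pnp(2) by force
  have PnP': "Pn \<subseteq> P'" using P'I[of _ 0] MWp(2) by force
  have tW: "t \<in> W" if "t \<in> T" for t using that TW by auto
  have mulf: "(t1 + w1) * (t2 + w2) = t1 * t2 + (t1 * w2 + (t2 * w1 + w1 * w2))" for t1 t2 w1 w2 :: 'a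
    by (simp add: algebra_simps)
  have mw: "t1 * w2 + (t2 * w1 + w1 * w2) \<in> MW" if "t1 \<in> T" "t2 \<in> T" "w1 \<in> MW" "w2 \<in> MW" for t1 t2 w1 w2
    using that tW MWp by (meson subsetD)
  have Rsub: "is_subring R" unfolding is_subring_def
  proof (intro conjI ballI)
    show "0 \<in> R" "1 \<in> R" using TR subringD(1,2)[OF T] by auto
  next
    fix a b assume "a \<in> R" "b \<in> R"
    then obtain t1 w1 t2 w2 where ab: "a = t1 + w1" "t1 \<in> T" "w1 \<in> MW" "b = t2 + w2" "t2 \<in> T" "w2 \<in> MW"
      using RE by metis
    have e: "a + b = (t1 + t2) + (w1 + w2)" "a - b = (t1 - t2) + (w1 - w2)" using ab by (auto simp: algebra_simps)
    show "a + b \<in> R" "a - b \<in> R" unfolding e using ab RI subringD(3,4)[OF T] MWp(3,4) by auto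
    show "a * b \<in> R" unfolding ab(1,4) mulf using RI subringD(5)[OF T] mw ab by auto
  qed
  have RK: "R \<subseteq> K"
  proof
    fix z assume "z \<in> R"
    then obtain t w where "z = t + w" "t \<in> T" "w \<in> MW" using RE by metis
    moreover have "is_subring K" using K unfolding subfield_def by auto
    ultimately show "z \<in> K" using TK WK MWp(1) subringD(3) by blast
  qed
  have key: "t \<in> Pn" if "t \<in> T" "p \<in> Pn" "w \<in> MW" "w' \<in> MW" "t + w = p + w'" for t p w w'
  proof -
    have "t - p = w' - w" using that by (simp add: algebra_simps)
    moreover have "t - p \<in> T" using that Pnp(1) subringD(4)[OF T] by auto
    moreover have "w' - w \<in> MW" using that MWp(4) by auto
    ultimately have "t - p \<in> Pn" using MWT by auto
    then have "(t - p) + p \<in> Pn" using Pnp(3) that by blast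
    then show ?thesis by simp
  qed
  have P'prime: "prime_ideal R P'" unfolding prime_ideal_def is_ideal_def
  proof (intro conjI ballI impI)
    show "P' \<subseteq> R"
    proof
      fix z assume "z \<in> P'"
      then obtain p w where "z = p + w" "p \<in> Pn" "w \<in> MW" using P'E by metis
      then show "z \<in> R" using RI[of p w] Pnp(1) by auto
    qed
    show "0 \<in> P'" using PnP' Pnp(2) by auto
  next
    fix x y assume "x \<in> P'" "y \<in> P'"
    then obtain t1 w1 t2 w2 where ab: "x = t1 + w1" "t1 \<in> Pn" "w1 \<in> MW" "y = t2 + w2" "t2 \<in> Pn" "w2 \<in> MW"
      using P'E by metis
    have e: "x + y = (t1 + t2) + (w1 + w2)" "x - y = (t1 - t2) + (w1 - w2)" using ab by (auto simp: algebra_simps)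
    show "x + y \<in> P'" "x - y \<in> P'" unfolding e using ab P'I Pnp(3,4) MWp(3,4) by auto
  next
    fix r x assume "r \<in> R" "x \<in> P'"
    then obtain t1 w1 t2 w2 where ab: "r = t1 + w1" "t1 \<in> T" "w1 \<in> MW" "x = t2 + w2" "t2 \<in> Pn" "w2 \<in> MW"
      using RE P'E by metis
    have "t2 \<in> T" using ab Pnp(1) by auto
    then show "r * x \<in> P'" unfolding ab(1,4) mulf using P'I Pnp(5) mw ab by auto
  next
    show "P' \<noteq> R"
    proof
      assume "P' = R"
      then have "1 + 0 \<in> P'" using RI[of 1 0] subringD(2)[OF T] MWp(2) by auto
      then obtain p w where "1 + 0 = p + w" "p \<in> Pn" "w \<in> MW" using P'E by metis
      then have "1 \<in> Pn" using key[of 1 p 0 w] subringD(2)[OF T] MWp(2) by auto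
      then show False using Pn1 by simp
    qed
  next
    fix x y assume "x \<in> R" "y \<in> R" "x * y \<in> P'"
    then obtain t1 w1 t2 w2 where ab: "x = t1 + w1" "t1 \<in> T" "w1 \<in> MW" "y = t2 + w2" "t2 \<in> T" "w2 \<in> MW"
      using RE by metis
    obtain p w where pw: "x * y = p + w" "p \<in> Pn" "w \<in> MW" using P'E \<open>x * y \<in> P'\<close> by metis
    have "t1 * t2 + (t1 * w2 + (t2 * w1 + w1 * w2)) = p + w" using pw ab mulf by simp
    moreover have "t1 * t2 \<in> T" using ab subringD(5)[OF T] by auto
    moreover have "t1 * w2 + (t2 * w1 + w1 * w2) \<in> MW" using mw ab by auto
    ultimately have "t1 * t2 \<in> Pn" using key[of "t1 * t2" p "t1 * w2 + (t2 * w1 + w1 * w2)" w] pw by auto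
    then have "t1 \<in> Pn \<or> t2 \<in> Pn" using Pnprime ab by auto
    then show "x \<in> P' \<or> y \<in> P'" using ab P'I by auto
  qed
  obtain V where V: "valring K V" "R \<subseteq> V" "maxv V \<inter> R = P'"
    using chevalley[OF K Rsub RK P'prime] by blast
  have Vsub: "is_subring V" using V unfolding valring_def by auto
  have MWV: "MW \<subseteq> maxv V" using V(3) MWP' MWR by blast
  have VW: "V \<subseteq> W"
  proof
    fix x assume xV: "x \<in> V"
    show "x \<in> W"
    proof (rule ccontr)
      assume xW: "x \<notin> W"
      have "x \<in> K" using xV V(1) unfolding valring_def by auto
      moreover have "x \<noteq> 0" using xW subringD(1)[OF Wsub] by auto
      ultimately have ixW: "inverse x \<in> W" using W xW unfolding valring_def by auto
      then have "inverse x \<in> MW" unfolding MW_def maxv_def using xW by auto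
      then have "inverse x \<in> maxv V" using MWV by auto
      then show False using xV \<open>x \<noteq> 0\<close> unfolding maxv_def by auto
    qed
  qed
  have VT: "maxv V \<inter> T = Pn"
  proof
    show "Pn \<subseteq> maxv V \<inter> T" using PnP' V(3) Pnp(1) by blast
    show "maxv V \<inter> T \<subseteq> Pn"
    proof
      fix x assume x: "x \<in> maxv V \<inter> T"
      then have "x \<in> P'" using V(3) TR by blast
      then obtain p w where "x = p + w" "p \<in> Pn" "w \<in> MW" using P'E by metis
      then show "x \<in> Pn" using key[of x p 0 w] x MWp(2) by auto
    qed
  qed
  have strict: "MW \<subset> maxv V"
  proof -
    obtain p where "p \<in> Pn" "p \<notin> Pm" using PmPn by blast
    then have "p \<in> maxv V" "p \<notin> MW" using VT WT Pnp(1) MW_def by auto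
    then show ?thesis using MWV by blast
  qed
  show ?thesis using V VW VT strict TR MW_def by blast
qed

lemma chain_val:
  fixes K T :: "'a::field set" and P :: "nat \<Rightarrow> 'a set"
  assumes K: "subfield K" and T: "is_subring T" and TK: "T \<subseteq> K"
  shows "(\<forall>i\<le>m. prime_ideal T (P i)) \<Longrightarrow> (\<forall>i<m. P i \<subset> P (Suc i)) \<Longrightarrow>
    \<exists>V Q. valring K V \<and> T \<subseteq> V \<and> (\<forall>i\<le>m. prime_ideal V (Q i)) \<and> (\<forall>i<m. Q i \<subset> Q (Suc i))
       \<and> Q m = maxv V \<and> maxv V \<inter> T = P m"
proof (induction m)
  case 0
  obtain V where V: "valring K V" "T \<subseteq> V" "maxv V \<inter> T = P 0"
  proof -
    have "prime_ideal T (P 0)" using 0 by blast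
    then show ?thesis using chevalley[OF K T TK, of "P 0"] that by blast
  qed
  have "prime_ideal V (maxv V)" using maxv_prime[OF K V(1)] .
  then show ?case
    by (intro exI[of _ V] exI[of _ "\<lambda>_. maxv V"]) (simp add: V)
next
  case (Suc m)
  obtain W Q where WQ: "valring K W" "T \<subseteq> W" "\<forall>i\<le>m. prime_ideal W (Q i)" "\<forall>i<m. Q i \<subset> Q (Suc i)"
    "Q m = maxv W" "maxv W \<inter> T = P m"
  proof -
    have "\<forall>i\<le>m. prime_ideal T (P i)" "\<forall>i<m. P i \<subset> P (Suc i)" using Suc.prems by auto
    from Suc.IH[OF this] show ?thesis using that by blast
  qed
  obtain V where V: "valring K V" "T \<subseteq> V" "V \<subseteq> W" "maxv W \<subset> maxv V" "maxv V \<inter> T = P (Suc m)"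
  proof -
    have "prime_ideal T (P (Suc m))" "P m \<subset> P (Suc m)" using Suc.prems by auto
    then show ?thesis using chain_step[OF K T TK WQ(1,2,6), of "P (Suc m)"] that by blast
  qed
  have Vsub: "is_subring V" using V(1) unfolding valring_def by auto
  have Wsub: "is_subring W" using WQ(1) unfolding valring_def by auto
  define Q' where "Q' = Q(Suc m := maxv V)"
  have Qp: "prime_ideal V (Q i)" if "i \<le> m" for i
  proof -
    have pr: "prime_ideal W (Q i)" using WQ(3) that by auto
    have QW: "Q i \<subseteq> maxv W" using prime_sub_maxv[OF Wsub pr] .
    have QV: "Q i \<subseteq> V" using QW V(4) maxv_sub by blast
    have "1 \<notin> Q i" using prime_one[OF Wsub pr] .
    moreover have "1 \<in> V" using subringD(2)[OF Vsub] .
    ultimately have ne: "Q i \<noteq> V" by blast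
    have i: "is_ideal W (Q i)" and prm: "\<forall>x\<in>W. \<forall>y\<in>W. x * y \<in> Q i \<longrightarrow> x \<in> Q i \<or> y \<in> Q i"
      using pr unfolding prime_ideal_def by auto
    note ip = ideal_props[OF i]
    have "is_ideal V (Q i)" unfolding is_ideal_def
      using QV ip(2,3,4) ip(5) V(3) by (meson subsetD)
    moreover have "\<forall>x\<in>V. \<forall>y\<in>V. x * y \<in> Q i \<longrightarrow> x \<in> Q i \<or> y \<in> Q i"
      using prm V(3) by blast
    ultimately show ?thesis using ne unfolding prime_ideal_def by blast
  qed
  have A1: "\<forall>i\<le>Suc m. prime_ideal V (Q' i)"
  proof (intro allI impI)
    fix i assume "i \<le> Suc m"
    then consider "i \<le> m" | "i = Suc m" by linarith
    then show "prime_ideal V (Q' i)"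
      by cases (simp_all add: Q'_def Qp maxv_prime[OF K V(1)])
  qed
  have A2: "\<forall>i<Suc m. Q' i \<subset> Q' (Suc i)"
  proof (intro allI impI)
    fix i assume "i < Suc m"
    then consider "i < m" | "i = m" by linarith
    then show "Q' i \<subset> Q' (Suc i)"
      by cases (simp_all add: Q'_def WQ(4,5) V(4))
  qed
  have A3: "Q' (Suc m) = maxv V" unfolding Q'_def by simp
  show ?case using V(1,2,5) A1 A2 A3 by blast
qed



lemma set_sum_closed:
  assumes "0 \<in> E" "\<And>x y. x \<in> E \<Longrightarrow> y \<in> E \<Longrightarrow> x + y \<in> E" "\<And>a. a \<in> A \<Longrightarrow> f a \<in> E"
  shows "sum f A \<in> E"
  using assms(3)
proof (induction A rule: infinite_finite_induct)
  case (infinite A) then show ?case using assms(1) by simp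
next
  case empty then show ?case using assms(1) by simp
next
  case (insert x F) then show ?case using assms(2) by simp
qed

lemma dspanI: "\<forall>s\<in>S. c s \<in> D \<Longrightarrow> (\<Sum>s\<in>S. c s * s) \<in> dspan D S"
  unfolding dspan_def by blast

lemma dspanE: "z \<in> dspan D S \<Longrightarrow> \<exists>c. z = (\<Sum>s\<in>S. c s * s) \<and> (\<forall>s\<in>S. c s \<in> D)"
  unfolding dspan_def by blast

lemma dspan_sub:
  assumes "0 \<in> E" "\<And>x y. x \<in> E \<Longrightarrow> y \<in> E \<Longrightarrow> x + y \<in> E" "\<And>d x. d \<in> D \<Longrightarrow> x \<in> E \<Longrightarrow> d * x \<in> E"
    and "S \<subseteq> E"
  shows "dspan D S \<subseteq> E"
proof
  fix z assume "z \<in> dspan D S"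
  then obtain c where z: "z = (\<Sum>s\<in>S. c s * s)" "\<forall>s\<in>S. c s \<in> D" using dspanE by blast
  show "z \<in> E" unfolding z(1) by (rule set_sum_closed) (use assms z(2) in auto)
qed

lemma dspan_closed:
  assumes D: "is_subring D"
  shows "0 \<in> dspan D S" "x \<in> dspan D S \<Longrightarrow> y \<in> dspan D S \<Longrightarrow> x + y \<in> dspan D S"
    "d \<in> D \<Longrightarrow> x \<in> dspan D S \<Longrightarrow> d * x \<in> dspan D S"
proof -
  show "0 \<in> dspan D S" using dspanI[of S "\<lambda>_. 0" D] subringD(1)[OF D] by simp
next
  assume x: "x \<in> dspan D S" and y: "y \<in> dspan D S"
  obtain c where "x = (\<Sum>s\<in>S. c s * s)" "\<forall>s\<in>S. c s \<in> D" using dspanE[OF x] by blast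
  moreover obtain c' where "y = (\<Sum>s\<in>S. c' s * s)" "\<forall>s\<in>S. c' s \<in> D" using dspanE[OF y] by blast
  moreover have "(\<Sum>s\<in>S. c s * s) + (\<Sum>s\<in>S. c' s * s) = (\<Sum>s\<in>S. (c s + c' s) * s)"
    by (simp add: sum.distrib distrib_right)
  ultimately show "x + y \<in> dspan D S" using dspanI[of S "\<lambda>s. c s + c' s" D] subringD(3)[OF D] by auto
next
  assume "d \<in> D" and x: "x \<in> dspan D S"
  obtain c where "x = (\<Sum>s\<in>S. c s * s)" "\<forall>s\<in>S. c s \<in> D" using dspanE[OF x] by blast
  moreover have "d * (\<Sum>s\<in>S. c s * s) = (\<Sum>s\<in>S. (d * c s) * s)"
    by (simp add: sum_distrib_left mult.assoc)
  ultimately show "d * x \<in> dspan D S" using dspanI[of S "\<lambda>s. d * c s" D] subringD(5)[OF D] \<open>d \<in> D\<close>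
    by auto
qed

lemma dspan_gen:
  assumes D: "is_subring D" and S: "finite S" and s0: "s0 \<in> S"
  shows "s0 \<in> dspan D S"
proof -
  have "(\<Sum>s\<in>S. (if s = s0 then 1 else 0) * s) = (\<Sum>s\<in>S. if s = s0 then s else 0)"
    by (rule sum.cong) auto
  also have "\<dots> = s0" using S s0 by (simp add: sum.delta')
  finally show ?thesis using dspanI[of S "\<lambda>s. if s = s0 then 1 else 0" D] subringD(1,2)[OF D] by auto
qed

lemma dspan_gens: "is_subring D \<Longrightarrow> finite S \<Longrightarrow> S \<subseteq> dspan D S"
  using dspan_gen by blast

lemma dspan_mono:
  assumes D: "is_subring D" and "finite S'" "S \<subseteq> S'"
  shows "dspan D S \<subseteq> dspan D S'"
proof (rule dspan_sub)
  show "0 \<in> dspan D S'" by (rule dspan_closed(1)[OF D])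
  show "x + y \<in> dspan D S'" if "x \<in> dspan D S'" "y \<in> dspan D S'" for x y
    using dspan_closed(2)[OF D that] .
  show "d * x \<in> dspan D S'" if "d \<in> D" "x \<in> dspan D S'" for d x
    using dspan_closed(3)[OF D that] .
  show "S \<subseteq> dspan D S'" using dspan_gens[OF D assms(2)] assms(3) by blast
qed

lemma dspan_submod:
  assumes D: "is_subring D" and S: "finite S" "S \<subseteq> qfield D"
  shows "is_submod D (dspan D S)"
proof -
  have K: "subfield (qfield D)" using qfield_subfield[OF D] .
  have KK: "is_subring (qfield D)" using K unfolding subfield_def by auto
  have "dspan D S \<subseteq> qfield D"
  proof (rule dspan_sub)
    show "0 \<in> qfield D" by (rule subringD(1)[OF KK])
    show "x + y \<in> qfield D" if "x \<in> qfield D" "y \<in> qfield D" for x y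
      by (rule subringD(3)[OF KK that])
    show "d * x \<in> qfield D" if "d \<in> D" "x \<in> qfield D" for d x
      using subringD(5)[OF KK _ that(2)] D_sub_qfield[OF D] that(1) by blast
    show "S \<subseteq> qfield D" by (rule S(2))
  qed
  then show ?thesis unfolding is_submod_def
    using dspan_closed(1)[OF D] dspan_closed(2)[OF D] dspan_closed(3)[OF D] by blast
qed

lemma fD_Fbar: "is_subring D \<Longrightarrow> F \<in> fD D \<Longrightarrow> F \<in> Fbar D"
  unfolding fD_def Fbar_def using dspan_submod by blast

lemma fDE: "F \<in> fD D \<Longrightarrow> \<exists>S. F = dspan D S \<and> finite S \<and> S \<subseteq> qfield D \<and> dspan D S \<noteq> {0}"
  unfolding fD_def by blast

lemma fDI: "finite S \<Longrightarrow> S \<subseteq> qfield D \<Longrightarrow> dspan D S \<noteq> {0} \<Longrightarrow> dspan D S \<in> fD D"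
  unfolding fD_def by blast

lemma D_Fbar: assumes D: "is_subring D" shows "D \<in> Fbar D"
proof -
  have "is_submod D D" unfolding is_submod_def
    using D_sub_qfield[OF D] subringD(1)[OF D] subringD(3)[OF D] subringD(5)[OF D] by blast
  moreover have "D \<noteq> {0}" using subringD(2)[OF D] by auto
  ultimately show ?thesis unfolding Fbar_def by blast
qed

lemma Fbar_submod: "E \<in> Fbar D \<Longrightarrow> is_submod D E" unfolding Fbar_def by blast

lemma submodD:
  assumes "is_submod D E"
  shows "E \<subseteq> qfield D" "0 \<in> E" "x \<in> E \<Longrightarrow> y \<in> E \<Longrightarrow> x + y \<in> E" "d \<in> D \<Longrightarrow> x \<in> E \<Longrightarrow> d * x \<in> E"
  using assms unfolding is_submod_def by auto

locale sstar =
  fixes D :: "'a::field set" and st :: "'a set \<Rightarrow> 'a set"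
  assumes D: "is_subring D" and ss: "semistar D st"
begin

lemma ss_parts1: "\<forall>E\<in>Fbar D. st E \<in> Fbar D"
  using ss unfolding semistar_def by (rule conjunct1)
lemma ss_parts2: "\<forall>E\<in>Fbar D. \<forall>F\<in>Fbar D. E \<subseteq> F \<longrightarrow> st E \<subseteq> st F"
  using ss unfolding semistar_def by (rule conjunct1[OF conjunct2[OF conjunct2]])
lemma ss_parts3: "\<forall>E\<in>Fbar D. E \<subseteq> st E \<and> st (st E) = st E"
  using ss unfolding semistar_def by (rule conjunct2[OF conjunct2[OF conjunct2]])
lemmas ss_parts = ss_parts1 ss_parts2 ss_parts3

lemma st_Fbar: "E \<in> Fbar D \<Longrightarrow> st E \<in> Fbar D" using ss_parts(1) by blast
lemma st_ext: "E \<in> Fbar D \<Longrightarrow> E \<subseteq> st E" using ss_parts(3) by blast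
lemma st_idem: "E \<in> Fbar D \<Longrightarrow> st (st E) = st E" using ss_parts(3) by blast
lemma st_mono: "E \<in> Fbar D \<Longrightarrow> F \<in> Fbar D \<Longrightarrow> E \<subseteq> F \<Longrightarrow> st E \<subseteq> st F"
  using ss_parts(2) by blast

lemma st_sm: "E \<in> Fbar D \<Longrightarrow> is_submod D (st E)" using st_Fbar Fbar_submod by blast

lemma one_st_eq:
  assumes G: "G \<in> fD D" "G \<subseteq> D" and one: "1 \<in> st G"
  shows "st G = st D"
proof
  have GF: "G \<in> Fbar D" using fD_Fbar[OF D G(1)] .
  show "st G \<subseteq> st D" using st_mono[OF GF D_Fbar[OF D] G(2)] .
  have "D \<subseteq> st G"
  proof
    fix d assume "d \<in> D"
    then have "d * 1 \<in> st G" using submodD(4)[OF st_sm[OF GF]] one by blast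
    then show "d \<in> st G" by simp
  qed
  then have "st D \<subseteq> st (st G)" using st_mono[OF D_Fbar[OF D] st_Fbar[OF GF]] by blast
  then show "st D \<subseteq> st G" using st_idem[OF GF] by simp
qed

lemma star_fI: "G \<in> fD D \<Longrightarrow> G \<subseteq> E \<Longrightarrow> x \<in> st G \<Longrightarrow> x \<in> star_f D st E"
  unfolding star_f_def by blast

lemma star_fE: "x \<in> star_f D st E \<Longrightarrow> \<exists>G. G \<in> fD D \<and> G \<subseteq> E \<and> x \<in> st G"
  unfolding star_f_def by blast

lemma ideal_one: "is_ideal D J \<Longrightarrow> 1 \<in> J \<Longrightarrow> J = D"
proof
  assume i: "is_ideal D J" and o: "1 \<in> J"
  show "J \<subseteq> D" using i unfolding is_ideal_def by blast
  show "D \<subseteq> J"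
  proof
    fix d assume "d \<in> D"
    then have "d * 1 \<in> J" using i o unfolding is_ideal_def by blast
    then show "d \<in> J" by simp
  qed
qed

lemma ideal_dspan: "is_ideal D J \<Longrightarrow> S \<subseteq> J \<Longrightarrow> dspan D S \<subseteq> J"
  by (rule dspan_sub) (auto simp: is_ideal_def)

end



context sstar
begin

abbreviation "K \<equiv> qfield D"

lemma KK: "is_subring K" using qfield_subfield[OF D] unfolding subfield_def by auto

lemma locI: "x \<in> D \<Longrightarrow> s \<in> D \<Longrightarrow> s \<notin> M \<Longrightarrow> x / s \<in> loc D M"
  unfolding loc_def by blast

lemma locE: "z \<in> loc D M \<Longrightarrow> \<exists>x s. z = x / s \<and> x \<in> D \<and> s \<in> D \<and> s \<notin> M"
  unfolding loc_def by blast

lemma loc_K: "loc D M \<subseteq> K"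
proof
  fix z assume "z \<in> loc D M"
  then obtain x s where "z = x / s" "x \<in> D" "s \<in> D" using locE by blast
  then show "z \<in> K" using subfield_div[OF qfield_subfield[OF D]] D_sub_qfield[OF D] by blast
qed

lemma star_tilde_sub:
  assumes "M \<in> QMax D st" shows "star_tilde D st F \<subseteq> submod_prod F (loc D M)"
proof -
  have "QMax D st \<noteq> {}" using assms by blast
  then have "star_tilde D st F = \<Inter>{submod_prod F (loc D M) | M. M \<in> QMax D st}"
    unfolding star_tilde_def by simp
  then show ?thesis using assms by blast
qed

lemma star_tilde_K:
  assumes "F \<in> Fbar D" shows "star_tilde D st F \<subseteq> K"
proof (cases "QMax D st = {}")
  case True then show ?thesis unfolding star_tilde_def by simp
next
  case False
  then obtain M where M: "M \<in> QMax D st" by blast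
  have "F \<subseteq> K" using submodD(1)[OF Fbar_submod[OF assms]] .
  then have "submod_prod F (loc D M) \<subseteq> K" using sp_subring[OF KK _ loc_K] by blast
  then show ?thesis using star_tilde_sub[OF M] by blast
qed

lemma one_sp_eq:
  assumes V: "is_subring V" and FV: "F \<subseteq> V" and one: "1 \<in> submod_prod F V"
  shows "submod_prod F V = V"
proof
  show "submod_prod F V \<subseteq> V" using sp_subring[OF V FV] by blast
  show "V \<subseteq> submod_prod F V"
  proof
    fix v assume "v \<in> V"
    then have "v * 1 \<in> submod_prod F V"
      using one by (intro sp_smult) (auto intro: subringD(5)[OF V])
    then show "v \<in> submod_prod F V" by simp
  qed
qed

lemma linked_from_tilde:
  assumes tv: "tilde_valuation_overring D st V"
  shows "star_dT_linked D st V"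
proof -
  have ov: "overring D V" using tv unfolding tilde_valuation_overring_def valuation_overring_def by blast
  have Vsub: "is_subring V" and DV: "D \<subseteq> V" using ov unfolding overring_def by auto
  have til: "\<forall>F\<in>fD D. star_tilde D st F \<subseteq> submod_prod F V"
    using tv unfolding tilde_valuation_overring_def by blast
  have "submod_prod F V = V" if F: "F \<in> fD D" "F \<subseteq> D" "st F = st D" for F
  proof -
    have FF: "F \<in> Fbar D" using fD_Fbar[OF D F(1)] .
    have 1: "1 \<in> star_tilde D st F"
    proof (cases "QMax D st = {}")
      case True
      then show ?thesis unfolding star_tilde_def using D_sub_qfield[OF D] subringD(2)[OF D] by auto
    next
      case False
      have "1 \<in> submod_prod F (loc D M)" if M: "M \<in> QMax D st" for M
      proof -
        have q: "quasi_ideal D st M" "M \<noteq> D" using M unfolding QMax_def by auto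
        have Mi: "is_ideal D M" and Mq: "star_f D st M \<inter> D = M" using q(1) unfolding quasi_ideal_def by auto
        have "\<exists>f\<in>F. f \<notin> M"
        proof (rule ccontr)
          assume "\<not> ?thesis"
          then have FM: "F \<subseteq> M" by blast
          have "1 \<in> st D" using st_ext[OF D_Fbar[OF D]] subringD(2)[OF D] by blast
          then have "1 \<in> st F" using F(3) by simp
          then have "1 \<in> star_f D st M" using star_fI[OF F(1) FM] by blast
          then have "1 \<in> M" using Mq subringD(2)[OF D] by blast
          then show False using ideal_one[OF Mi] q(2) by blast
        qed
        then obtain f where f: "f \<in> F" "f \<notin> M" by blast
        have fD: "f \<in> D" using f F(2) by blast
        have "f \<noteq> 0" using f(2) Mi unfolding is_ideal_def by auto
        then have "f * (1 / f) = 1" by simp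
        moreover have "1 / f \<in> loc D M" using locI[OF subringD(2)[OF D] fD f(2)] .
        ultimately show ?thesis using sp_one[OF f(1), of "1 / f" "loc D M"] by simp
      qed
      then show ?thesis unfolding star_tilde_def using False by auto
    qed
    have "1 \<in> submod_prod F V" using 1 til F(1) by blast
    then show ?thesis using one_sp_eq[OF Vsub _] F(2) DV by blast
  qed
  then show ?thesis unfolding star_dT_linked_def using ov by blast
qed

end



context sstar
begin

lemma qmax_exists:
  fixes N :: "'a set"
  assumes Ni: "is_ideal D N" and Nnz: "\<exists>y\<in>N. y \<noteq> 0"
    and N1: "\<And>G. G \<in> fD D \<Longrightarrow> G \<subseteq> N \<Longrightarrow> 1 \<notin> st G"
  shows "\<exists>M\<in>QMax D st. N \<subseteq> M"
proof -
  define Fam where "Fam = {J. is_ideal D J \<and> N \<subseteq> J \<and> (\<forall>G\<in>fD D. G \<subseteq> J \<longrightarrow> 1 \<notin> st G)}"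
  have "\<exists>M\<in>Fam. \<forall>X\<in>Fam. M \<subseteq> X \<longrightarrow> X = M"
  proof (rule subset_Zorn_nonempty)
    show "Fam \<noteq> {}" using Ni N1 unfolding Fam_def by blast
  next
    fix C assume Cne: "C \<noteq> {}" and ch: "subset.chain Fam C"
    have CF: "C \<subseteq> Fam" and cmp: "\<And>X Y. X \<in> C \<Longrightarrow> Y \<in> C \<Longrightarrow> X \<subseteq> Y \<or> Y \<subseteq> X"
      using ch unfolding subset_chain_def by auto
    have Ci: "is_ideal D J" if "J \<in> C" for J using that CF unfolding Fam_def by blast
    have two: "\<exists>S\<in>C. x \<in> S \<and> y \<in> S" if "x \<in> \<Union>C" "y \<in> \<Union>C" for x y
      using that cmp by blast
    have "is_ideal D (\<Union>C)" unfolding is_ideal_def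
    proof (intro conjI ballI)
      show "\<Union>C \<subseteq> D" using Ci unfolding is_ideal_def by blast
      show "0 \<in> \<Union>C" using Ci Cne unfolding is_ideal_def by blast
    next
      fix x y assume "x \<in> \<Union>C" "y \<in> \<Union>C"
      then obtain J where J: "J \<in> C" "x \<in> J" "y \<in> J" using two by blast
      then show "x + y \<in> \<Union>C" "x - y \<in> \<Union>C" using Ci[OF J(1)] unfolding is_ideal_def by blast+
    next
      fix t x assume "t \<in> D" "x \<in> \<Union>C"
      then obtain J where J: "J \<in> C" "x \<in> J" by blast
      then show "t * x \<in> \<Union>C" using Ci[OF J(1)] \<open>t \<in> D\<close> unfolding is_ideal_def by blast
    qed
    moreover have "N \<subseteq> \<Union>C" using Cne CF unfolding Fam_def by blast
    moreover have "1 \<notin> st G" if G: "G \<in> fD D" "G \<subseteq> \<Union>C" for G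
    proof -
      obtain S where S: "G = dspan D S" "finite S" "S \<subseteq> qfield D" using fDE[OF G(1)] by blast
      have "S \<subseteq> \<Union>C" using dspan_gens[OF D S(2)] S(1) G(2) by blast
      then obtain J where J: "J \<in> C" "S \<subseteq> J" using finite_subset_Union_chain[OF S(2) _ Cne ch] by metis
      have "G \<subseteq> J" using ideal_dspan[OF Ci[OF J(1)] J(2)] S(1) by blast
      then show ?thesis using J(1) CF G(1) unfolding Fam_def by blast
    qed
    ultimately show "\<Union>C \<in> Fam" unfolding Fam_def by blast
  qed
  then obtain J0 where J0F: "J0 \<in> Fam" and J0max: "\<And>X. X \<in> Fam \<Longrightarrow> J0 \<subseteq> X \<Longrightarrow> X = J0" by blast
  have J0i: "is_ideal D J0" and NJ0: "N \<subseteq> J0" and J01: "\<And>G. G \<in> fD D \<Longrightarrow> G \<subseteq> J0 \<Longrightarrow> 1 \<notin> st G"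
    using J0F unfolding Fam_def by auto
  note J0p = ideal_props[OF J0i]
  have single: "dspan D {z} \<in> fD D \<and> z \<in> dspan D {z}" if "z \<in> D" "z \<noteq> 0" for z
  proof -
    have "z \<in> dspan D {z}" using dspan_gen[OF D, of "{z}" z] by simp
    moreover have "{z} \<subseteq> qfield D" using that D_sub_qfield[OF D] by auto
    ultimately show ?thesis using fDI[of "{z}" D] that by auto
  qed
  have singJ: "dspan D {z} \<subseteq> J" if "is_ideal D J" "z \<in> J" for z J
    using ideal_dspan[OF that(1)] that(2) by blast
  obtain y where y: "y \<in> N" "y \<noteq> 0" using Nnz by blast
  have yJ: "y \<in> J0" "y \<in> D" using y NJ0 J0p(1) by auto
  have sub1: "J0 \<subseteq> star_f D st J0 \<inter> D"
  proof
    fix x assume x: "x \<in> J0"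
    have xD: "x \<in> D" using x J0p(1) by blast
    have "x \<in> star_f D st J0"
    proof (cases "x = 0")
      case False
      have G: "dspan D {x} \<in> fD D" "x \<in> dspan D {x}" using single[OF xD False] by auto
      have "x \<in> st (dspan D {x})" using st_ext[OF fD_Fbar[OF D G(1)]] G(2) by blast
      then show ?thesis using star_fI[OF G(1) singJ[OF J0i x]] by blast
    next
      case True
      have G: "dspan D {y} \<in> fD D" using single[OF yJ(2) y(2)] by auto
      have "0 \<in> st (dspan D {y})" using submodD(2)[OF st_sm[OF fD_Fbar[OF D G]]] .
      then show ?thesis using True star_fI[OF G singJ[OF J0i yJ(1)]] by blast
    qed
    then show "x \<in> star_f D st J0 \<inter> D" using xD by blast
  qed
  have sub2: "star_f D st J0 \<inter> D \<subseteq> J0"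
  proof
    fix x assume "x \<in> star_f D st J0 \<inter> D"
    then have xD: "x \<in> D" and "x \<in> star_f D st J0" by auto
    then obtain H where H: "H \<in> fD D" "H \<subseteq> J0" "x \<in> st H" using star_fE by blast
    define J' where "J' = {j + d * x | j d. j \<in> J0 \<and> d \<in> D}"
    have J'I: "j + d * x \<in> J'" if "j \<in> J0" "d \<in> D" for j d using that unfolding J'_def by blast
    have J'E: "\<exists>j d. z = j + d * x \<and> j \<in> J0 \<and> d \<in> D" if "z \<in> J'" for z
      using that unfolding J'_def by blast
    have J'i: "is_ideal D J'" unfolding is_ideal_def
    proof (intro conjI ballI)
      show "J' \<subseteq> D"
      proof
        fix z assume "z \<in> J'"
        then obtain j d where "z = j + d * x" "j \<in> J0" "d \<in> D" using J'E by blast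
        then show "z \<in> D" using J0p(1) xD subringD(3,5)[OF D] by blast
      qed
      show "0 \<in> J'" using J'I[OF J0p(2) subringD(1)[OF D]] by simp
    next
      fix a b assume "a \<in> J'" "b \<in> J'"
      then obtain j d j' d' where jd: "a = j + d * x" "j \<in> J0" "d \<in> D" "b = j' + d' * x" "j' \<in> J0" "d' \<in> D"
        using J'E by metis
      have e: "a + b = (j + j') + (d + d') * x" "a - b = (j - j') + (d - d') * x"
        using jd by (auto simp: algebra_simps)
      show "a + b \<in> J'" "a - b \<in> J'" unfolding e using jd J0p(3,4) subringD(3,4)[OF D] J'I by auto
    next
      fix t a assume "t \<in> D" "a \<in> J'"
      then obtain j d where jd: "a = j + d * x" "j \<in> J0" "d \<in> D" using J'E by blast
      have e: "t * a = t * j + (t * d) * x" using jd by (simp add: algebra_simps)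
      show "t * a \<in> J'" unfolding e using jd J0p(5) \<open>t \<in> D\<close> subringD(5)[OF D] J'I by auto
    qed
    have J0J': "J0 \<subseteq> J'" using J'I[OF _ subringD(1)[OF D]] by force
    have xJ': "x \<in> J'" using J'I[OF J0p(2) subringD(2)[OF D]] by simp
    show "x \<in> J0"
    proof (cases "\<forall>G\<in>fD D. G \<subseteq> J' \<longrightarrow> 1 \<notin> st G")
      case True
      then have "J' \<in> Fam" unfolding Fam_def using J'i J0J' NJ0 by blast
      then have "J' = J0" using J0max J0J' by blast
      then show ?thesis using xJ' by simp
    next
      case False
      then obtain G where G: "G \<in> fD D" "G \<subseteq> J'" "1 \<in> st G" by blast
      obtain S where S: "G = dspan D S" "finite S" "S \<subseteq> qfield D" using fDE[OF G(1)] by blast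
      obtain SH where SH: "H = dspan D SH" "finite SH" "SH \<subseteq> qfield D" "dspan D SH \<noteq> {0}"
        using fDE[OF H(1)] by blast
      have "\<forall>s\<in>S. \<exists>jd. s = fst jd + snd jd * x \<and> fst jd \<in> J0 \<and> snd jd \<in> D"
      proof
        fix s assume "s \<in> S"
        then have "s \<in> J'" using dspan_gens[OF D S(2)] S(1) G(2) by blast
        then obtain j d where "s = j + d * x" "j \<in> J0" "d \<in> D" using J'E by blast
        then show "\<exists>jd. s = fst jd + snd jd * x \<and> fst jd \<in> J0 \<and> snd jd \<in> D"
          by (intro exI[of _ "(j, d)"]) simp
      qed
      from bchoice[OF this] obtain f where
        f0: "\<forall>s\<in>S. s = fst (f s) + snd (f s) * x \<and> fst (f s) \<in> J0 \<and> snd (f s) \<in> D" ..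
      have f: "\<And>s. s \<in> S \<Longrightarrow> s = fst (f s) + snd (f s) * x \<and> fst (f s) \<in> J0 \<and> snd (f s) \<in> D"
        using f0 by blast
      define T0 where "T0 = (\<lambda>s. fst (f s)) ` S \<union> SH"
      define U where "U = dspan D T0"
      have finU: "finite T0" using S(2) SH(2) unfolding T0_def by blast
      have "SH \<subseteq> T0" unfolding T0_def by blast
      then have HU: "H \<subseteq> U" unfolding U_def SH(1) by (rule dspan_mono[OF D finU])
      have jfJ: "(\<lambda>s. fst (f s)) ` S \<subseteq> J0"
      proof
        fix z assume "z \<in> (\<lambda>s. fst (f s)) ` S"
        then obtain s where "s \<in> S" "z = fst (f s)" by blast
        then show "z \<in> J0" using f by blast
      qed
      have SHJ: "SH \<subseteq> J0" using dspan_gens[OF D SH(2)] SH(1) H(2) by blast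
      have T0J: "T0 \<subseteq> J0" unfolding T0_def using jfJ SHJ by (rule Un_least)
      have UJ: "U \<subseteq> J0" unfolding U_def using ideal_dspan[OF J0i T0J] .
      have "U \<noteq> {0}"
      proof
        assume "U = {0}"
        then have "H \<subseteq> {0}" using HU by blast
        moreover have "H \<noteq> {0}" using SH(1,4) by simp
        moreover have "0 \<in> H" using dspan_closed(1)[OF D] SH(1) by simp
        ultimately show False by blast
      qed
      moreover have "T0 \<subseteq> qfield D"
        using T0J J0p(1) D_sub_qfield[OF D] by blast
      ultimately have UfD: "U \<in> fD D" using fDI[OF finU] unfolding U_def by blast
      have UF: "U \<in> Fbar D" using fD_Fbar[OF D UfD] .
      note stU = submodD[OF st_sm[OF UF]]
      have "st H \<subseteq> st U" using st_mono[OF fD_Fbar[OF D H(1)] UF HU] .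
      then have xU: "x \<in> st U" using H(3) by blast
      have "S \<subseteq> st U"
      proof
        fix s assume s: "s \<in> S"
        have "fst (f s) \<in> T0" unfolding T0_def using s by blast
        then have "fst (f s) \<in> U" unfolding U_def using dspan_gens[OF D finU] by blast
        then have a: "fst (f s) \<in> st U" using st_ext[OF UF] by blast
        have b: "snd (f s) * x \<in> st U" using stU(4)[OF _ xU] f[OF s] by blast
        have "fst (f s) + snd (f s) * x \<in> st U" using stU(3)[OF a b] .
        moreover have "s = fst (f s) + snd (f s) * x" using f[OF s] by blast
        ultimately show "s \<in> st U" by simp
      qed
      then have GU: "G \<subseteq> st U" unfolding S(1)
        by (intro dspan_sub) (use stU in auto)
      have "st G \<subseteq> st (st U)" using st_mono[OF fD_Fbar[OF D G(1)] st_Fbar[OF UF] GU] .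
      then have "1 \<in> st U" using G(3) st_idem[OF UF] by blast
      then show ?thesis using J01[OF UfD UJ] by blast
    qed
  qed
  have q: "quasi_ideal D st J0" unfolding quasi_ideal_def
    using J0i sub1 sub2 yJ(1) y(2) by blast
  have ne: "J0 \<noteq> D"
  proof
    assume "J0 = D"
    have G: "dspan D {1} \<in> fD D" "1 \<in> dspan D {1}" using single[OF subringD(2)[OF D]] by auto
    have "dspan D {1} \<subseteq> J0" using singJ[OF J0i] \<open>J0 = D\<close> subringD(2)[OF D] by blast
    moreover have "1 \<in> st (dspan D {1})" using st_ext[OF fD_Fbar[OF D G(1)]] G(2) by blast
    ultimately show False using J01 G(1) by blast
  qed
  have mx: "J = J0" if J: "quasi_ideal D st J" "J \<noteq> D" "J0 \<subseteq> J" for J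
  proof -
    have Ji: "is_ideal D J" and Jq: "star_f D st J \<inter> D = J" using J(1) unfolding quasi_ideal_def by auto
    have "1 \<notin> st G" if "G \<in> fD D" "G \<subseteq> J" for G
    proof
      assume "1 \<in> st G"
      then have "1 \<in> J" using star_fI[OF that] Jq subringD(2)[OF D] by blast
      then show False using ideal_one[OF Ji] J(2) by blast
    qed
    then have "J \<in> Fam" unfolding Fam_def using Ji J(3) NJ0 by blast
    then show ?thesis using J0max J(3) by blast
  qed
  have "J0 \<in> QMax D st" unfolding QMax_def using q ne mx by blast
  then show ?thesis using NJ0 by blast
qed

end



context sstar
begin

lemma tilde_from_linked:
  assumes lk: "star_dT_linked D st T" and V: "valring K V" and TV: "T \<subseteq> V"
  shows "tilde_valuation_overring D st V"
proof -
  have Kf: "subfield K" using qfield_subfield[OF D] .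
  have ovT: "overring D T" using lk unfolding star_dT_linked_def by blast
  have Tsub: "is_subring T" and DT: "D \<subseteq> T" using ovT unfolding overring_def by auto
  have lkF: "\<And>F. F \<in> fD D \<Longrightarrow> F \<subseteq> D \<Longrightarrow> st F = st D \<Longrightarrow> submod_prod F T = T"
    using lk unfolding star_dT_linked_def by blast
  have Vsub: "is_subring V" and VK: "V \<subseteq> K" and Vval: "\<forall>x\<in>K. x \<noteq> 0 \<longrightarrow> x \<in> V \<or> inverse x \<in> V"
    using V unfolding valring_def by auto
  have DV: "D \<subseteq> V" using DT TV by blast
  have vo: "valuation_overring D V"
    unfolding valuation_overring_def overring_def using Vsub DV VK Vval by blast
  have mi: "is_ideal V (maxv V)" using maxv_prime[OF Kf V] unfolding prime_ideal_def by blast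
  note mp = ideal_props[OF mi]
  define N where "N = maxv V \<inter> D"
  have "star_tilde D st F \<subseteq> submod_prod F V" if F: "F \<in> fD D" for F
  proof (cases "\<exists>y\<in>N. y \<noteq> 0")
    case False
    have KV: "K \<subseteq> V"
    proof
      fix z assume "z \<in> K"
      then obtain a b where ab: "z = a / b" "a \<in> D" "b \<in> D" "b \<noteq> 0" unfolding qfield_def by blast
      have "b \<notin> maxv V" using False ab N_def by blast
      then have "inverse b \<in> V" using notin_maxv DV ab(3) by blast
      then have "a * inverse b \<in> V" using subringD(5)[OF Vsub] DV ab(2) by blast
      then show "z \<in> V" using ab(1) by (simp add: divide_inverse)
    qed
    have FF: "F \<in> Fbar D" using fD_Fbar[OF D F] .
    note Fs = submodD[OF Fbar_submod[OF FF]]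
    obtain f where f: "f \<in> F" "f \<noteq> 0" using FF Fs(2) unfolding Fbar_def by blast
    show ?thesis
    proof
      fix z assume "z \<in> star_tilde D st F"
      then have zK: "z \<in> K" using star_tilde_K[OF FF] by blast
      have "z / f \<in> V" using KV subfield_div[OF Kf zK] f Fs(1) by blast
      then have "f * (z / f) \<in> submod_prod F V" using sp_one f(1) by blast
      then show "z \<in> submod_prod F V" using f(2) by simp
    qed
  next
    case True
    have Ni: "is_ideal D N" unfolding is_ideal_def N_def
    proof (intro conjI ballI)
      show "maxv V \<inter> D \<subseteq> D" by blast
      show "0 \<in> maxv V \<inter> D" using mp(2) subringD(1)[OF D] by blast
    next
      fix a b assume "a \<in> maxv V \<inter> D" "b \<in> maxv V \<inter> D"
      then show "a + b \<in> maxv V \<inter> D" "a - b \<in> maxv V \<inter> D"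
        using mp(3,4) subringD(3,4)[OF D] by blast+
    next
      fix t a assume "t \<in> D" "a \<in> maxv V \<inter> D"
      then show "t * a \<in> maxv V \<inter> D" using mp(5) DV subringD(5)[OF D] by blast
    qed
    have N1: "1 \<notin> st G" if G: "G \<in> fD D" "G \<subseteq> N" for G
    proof
      assume "1 \<in> st G"
      then have "st G = st D" using one_st_eq[OF G(1)] G(2) N_def by blast
      then have "submod_prod G T = T" using lkF[OF G(1)] G(2) N_def by blast
      then have "1 \<in> submod_prod G T" using subringD(2)[OF Tsub] by simp
      moreover have "submod_prod G T \<subseteq> maxv V"
      proof (rule sp_sub)
        show "0 \<in> maxv V" by (rule mp(2))
        show "x + y \<in> maxv V" if "x \<in> maxv V" "y \<in> maxv V" for x y using mp(3) that by blast
        show "a * b \<in> maxv V" if "a \<in> G" "b \<in> T" for a b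
        proof -
          have "b * a \<in> maxv V" using mp(5) that TV G(2) N_def by blast
          then show ?thesis by (simp add: mult.commute)
        qed
      qed
      ultimately show False using one_notin_maxv by blast
    qed
    obtain M where M: "M \<in> QMax D st" "N \<subseteq> M" using qmax_exists[OF Ni True N1] by blast
    have Mi: "is_ideal D M" using M(1) unfolding QMax_def quasi_ideal_def by blast
    have "loc D M \<subseteq> V"
    proof
      fix z assume "z \<in> loc D M"
      then obtain a s where as: "z = a / s" "a \<in> D" "s \<in> D" "s \<notin> M" using locE by blast
      have "s \<notin> maxv V" using as M(2) N_def by blast
      then have "inverse s \<in> V" using notin_maxv DV as(3) by blast
      then have "a * inverse s \<in> V" using subringD(5)[OF Vsub] DV as(2) by blast
      then show "z \<in> V" using as(1) by (simp add: divide_inverse)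
    qed
    then have "submod_prod F (loc D M) \<subseteq> submod_prod F V" using sp_mono by blast
    then show ?thesis using star_tilde_sub[OF M(1)] by blast
  qed
  then show ?thesis unfolding tilde_valuation_overring_def using vo by blast
qed

end

theorem lemma4p1:
  fixes D :: "'a::field set" and st :: "'a set \<Rightarrow> 'a set" and n :: nat
  assumes "is_subring D" and "semistar D st"
  shows "(\<forall>T. star_dT_linked D st T \<longrightarrow> krull_dim_le T n) \<longleftrightarrow>
         (\<forall>V. tilde_valuation_overring D st V \<longrightarrow> krull_dim_le V n)"
proof -
  interpret sstar D st using assms by unfold_locales
  show ?thesis
  proof
    assume H: "\<forall>T. star_dT_linked D st T \<longrightarrow> krull_dim_le T n"
    show "\<forall>V. tilde_valuation_overring D st V \<longrightarrow> krull_dim_le V n"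
      using H linked_from_tilde by blast
  next
    assume H: "\<forall>V. tilde_valuation_overring D st V \<longrightarrow> krull_dim_le V n"
    show "\<forall>T. star_dT_linked D st T \<longrightarrow> krull_dim_le T n"
    proof (intro allI impI)
      fix T assume lk: "star_dT_linked D st T"
      have ovT: "overring D T" using lk unfolding star_dT_linked_def by blast
      have Tsub: "is_subring T" and TK: "T \<subseteq> qfield D" using ovT unfolding overring_def by auto
      show "krull_dim_le T n"
      proof (rule ccontr)
        assume "\<not> krull_dim_le T n"
        then obtain P where P: "\<forall>i\<le>Suc n. prime_ideal T (P i)" "\<forall>i\<le>n. P i \<subset> P (Suc i)"
          unfolding krull_dim_le_def by blast
        have P2: "\<forall>i<Suc n. P i \<subset> P (Suc i)" using P(2) by (auto simp: less_Suc_eq_le)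
        obtain V Q where VQ: "valring (qfield D) V" "T \<subseteq> V" "\<forall>i\<le>Suc n. prime_ideal V (Q i)"
          "\<forall>i<Suc n. Q i \<subset> Q (Suc i)"
          using chain_val[OF qfield_subfield[OF assms(1)] Tsub TK P(1) P2] by blast
        have "tilde_valuation_overring D st V" using tilde_from_linked[OF lk VQ(1,2)] .
        then have "krull_dim_le V n" using H by blast
        moreover have "\<forall>i\<le>n. Q i \<subset> Q (Suc i)" using VQ(4) by (auto simp: less_Suc_eq_le)
        ultimately show False using VQ(3) unfolding krull_dim_le_def by blast
      qed
    qed
  qed
qed


end
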